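(* Let $H$ be a finite group, $A$ a finite faithful irreducible $H$-module, $t$ a positive integer, and $G=A^t\rtimes H$ (with $H$ acting diagonally on $A^t$). Then $\alpha(G)=t+\sigma(H,A)$. In particular, $t\leqslant\alpha(G)\leqslant t+\dim_{\mathrm{End}_H(A)}A$.
   Context: $\alpha(G)$ is the minimal number of maximal subgroups of $G$ whose intersection equals the Frattini subgroup $\mathrm{Frat}(G)$. $\mathrm{Der}(H,A)$ is the set of derivations (crossed homomorphisms) $\delta:H\to A$, and for $\delta\in\mathrm{Der}(H,A)$ let $C_\delta=\{h\in H: h^\delta=0\}$. Let $\Lambda(H,A)$ be the union of the set of maximal subgroups of $H$ and $\{C_\delta:\delta\in\mathrm{Der}(H,A)\}$, and let $\sigma(H,A)$ be the minimal cardinality of a family of subgroups in $\Lambda(H,A)$ with trivial intersection. $\mathrm{End}_H(A)$ is the field of $H$-module endomorphisms of $A$. *)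

theory Defs
  imports "HOL-Algebra.Algebra"
begin

definition maximal_subgroup :: "'g set \<Rightarrow> ('g, 'b) monoid_scheme \<Rightarrow> bool" where
  "maximal_subgroup M G \<longleftrightarrow> subgroup M G \<and> M \<noteq> carrier G \<and>
     (\<forall>K. subgroup K G \<and> M \<subseteq> K \<longrightarrow> K = M \<or> K = carrier G)"

text \<open>Intersections of families of subgroups are taken inside the carrier,
  so the empty family has intersection the whole group.\<close>

definition frattini :: "('g, 'b) monoid_scheme \<Rightarrow> 'g set" where
  "frattini G = carrier G \<inter> \<Inter>{M. maximal_subgroup M G}"

definition alpha :: "('g, 'b) monoid_scheme \<Rightarrow> nat" where
  "alpha G = (LEAST n. \<exists>F. F \<subseteq> {M. maximal_subgroup M G} \<and> finite F \<and> card F = n \<and>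
                          carrier G \<inter> \<Inter>F = frattini G)"

definition right_module :: "('h, 'c) monoid_scheme \<Rightarrow> ('a, 'd) monoid_scheme \<Rightarrow> ('a \<Rightarrow> 'h \<Rightarrow> 'a) \<Rightarrow> bool" where
  "right_module H A act \<longleftrightarrow> group H \<and> comm_group A \<and>
     (\<forall>a\<in>carrier A. \<forall>h\<in>carrier H. act a h \<in> carrier A) \<and>
     (\<forall>a\<in>carrier A. \<forall>b\<in>carrier A. \<forall>h\<in>carrier H. act (a \<otimes>\<^bsub>A\<^esub> b) h = act a h \<otimes>\<^bsub>A\<^esub> act b h) \<and>
     (\<forall>a\<in>carrier A. act a \<one>\<^bsub>H\<^esub> = a) \<and>
     (\<forall>a\<in>carrier A. \<forall>h\<in>carrier H. \<forall>k\<in>carrier H. act a (h \<otimes>\<^bsub>H\<^esub> k) = act (act a h) k)"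

definition faithful_module :: "('h, 'c) monoid_scheme \<Rightarrow> ('a, 'd) monoid_scheme \<Rightarrow> ('a \<Rightarrow> 'h \<Rightarrow> 'a) \<Rightarrow> bool" where
  "faithful_module H A act \<longleftrightarrow>
     (\<forall>h\<in>carrier H. (\<forall>a\<in>carrier A. act a h = a) \<longrightarrow> h = \<one>\<^bsub>H\<^esub>)"

definition irreducible_module :: "('h, 'c) monoid_scheme \<Rightarrow> ('a, 'd) monoid_scheme \<Rightarrow> ('a \<Rightarrow> 'h \<Rightarrow> 'a) \<Rightarrow> bool" where
  "irreducible_module H A act \<longleftrightarrow> carrier A \<noteq> {\<one>\<^bsub>A\<^esub>} \<and>
     (\<forall>B. subgroup B A \<and> (\<forall>b\<in>B. \<forall>h\<in>carrier H. act b h \<in> B) \<longrightarrow>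
          B = {\<one>\<^bsub>A\<^esub>} \<or> B = carrier A)"

text \<open>Elements are pairs (h, v) with v : {..<t} \<rightarrow> A, multiplied by
  (h, v)(k, w) = (hk, v^k w), i.e. h v k w = hk (k^{-1} v k) w.\<close>

definition semidirect_power ::
  "('h, 'c) monoid_scheme \<Rightarrow> ('a, 'd) monoid_scheme \<Rightarrow> ('a \<Rightarrow> 'h \<Rightarrow> 'a) \<Rightarrow> nat \<Rightarrow> ('h \<times> (nat \<Rightarrow> 'a)) monoid" where
  "semidirect_power H A act t =
    \<lparr>carrier = carrier H \<times> ({..<t} \<rightarrow>\<^sub>E carrier A),
     monoid.mult = (\<lambda>(h, v) (k, w). (h \<otimes>\<^bsub>H\<^esub> k, \<lambda>i\<in>{..<t}. act (v i) k \<otimes>\<^bsub>A\<^esub> w i)),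
     one = (\<one>\<^bsub>H\<^esub>, \<lambda>i\<in>{..<t}. \<one>\<^bsub>A\<^esub>)\<rparr>"

definition derivations :: "('h, 'c) monoid_scheme \<Rightarrow> ('a, 'd) monoid_scheme \<Rightarrow> ('a \<Rightarrow> 'h \<Rightarrow> 'a) \<Rightarrow> ('h \<Rightarrow> 'a) set" where
  "derivations H A act = {\<delta> \<in> carrier H \<rightarrow>\<^sub>E carrier A.
      \<forall>h\<in>carrier H. \<forall>k\<in>carrier H. \<delta> (h \<otimes>\<^bsub>H\<^esub> k) = act (\<delta> h) k \<otimes>\<^bsub>A\<^esub> \<delta> k}"

definition der_kernel :: "('h, 'c) monoid_scheme \<Rightarrow> ('a, 'd) monoid_scheme \<Rightarrow> ('h \<Rightarrow> 'a) \<Rightarrow> 'h set" where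
  "der_kernel H A \<delta> = {h \<in> carrier H. \<delta> h = \<one>\<^bsub>A\<^esub>}"

definition Lambda :: "('h, 'c) monoid_scheme \<Rightarrow> ('a, 'd) monoid_scheme \<Rightarrow> ('a \<Rightarrow> 'h \<Rightarrow> 'a) \<Rightarrow> 'h set set" where
  "Lambda H A act = {M. maximal_subgroup M H} \<union> (der_kernel H A ` derivations H A act)"

definition sigma :: "('h, 'c) monoid_scheme \<Rightarrow> ('a, 'd) monoid_scheme \<Rightarrow> ('a \<Rightarrow> 'h \<Rightarrow> 'a) \<Rightarrow> nat" where
  "sigma H A act = (LEAST n. \<exists>F. F \<subseteq> Lambda H A act \<and> finite F \<and> card F = n \<and>
                              carrier H \<inter> \<Inter>F = {\<one>\<^bsub>H\<^esub>})"

definition End_H :: "('h, 'c) monoid_scheme \<Rightarrow> ('a, 'd) monoid_scheme \<Rightarrow> ('a \<Rightarrow> 'h \<Rightarrow> 'a) \<Rightarrow> ('a \<Rightarrow> 'a) set" where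
  "End_H H A act = {\<phi> \<in> carrier A \<rightarrow>\<^sub>E carrier A. \<phi> \<in> hom A A \<and>
      (\<forall>a\<in>carrier A. \<forall>h\<in>carrier H. \<phi> (act a h) = act (\<phi> a) h)}"

text \<open>Dimension of A over the field End_H(A) (acting by evaluation):
  the least size of a spanning family.\<close>

definition dim_End :: "('h, 'c) monoid_scheme \<Rightarrow> ('a, 'd) monoid_scheme \<Rightarrow> ('a \<Rightarrow> 'h \<Rightarrow> 'a) \<Rightarrow> nat" where
  "dim_End H A act = (LEAST n. \<exists>as. length as = n \<and> set as \<subseteq> carrier A \<and>
      (\<forall>a\<in>carrier A. \<exists>\<phi>s. length \<phi>s = n \<and> set \<phi>s \<subseteq> End_H H A act \<and>
          a = finprod A (\<lambda>i. (\<phi>s ! i) (as ! i)) {..<n}))"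

end

theory Submission imports Defs
begin

locale ctx = H: group H + A: comm_group A
  for H :: "'h monoid" and A :: "'a monoid" and act :: "'a \<Rightarrow> 'h \<Rightarrow> 'a" and t :: nat +
  assumes finH: "finite (carrier H)" and finA: "finite (carrier A)"
    and rm: "right_module H A act"
    and faith: "faithful_module H A act"
    and irr: "irreducible_module H A act"
    and tpos: "t > 0"
begin

abbreviation "G \<equiv> semidirect_power H A act t"
abbreviation "W \<equiv> {..<t} \<rightarrow>\<^sub>E carrier A"

lemma act_closed[simp]: "a \<in> carrier A \<Longrightarrow> h \<in> carrier H \<Longrightarrow> act a h \<in> carrier A"
  using rm unfolding right_module_def by blast
lemma act_mult: "a \<in> carrier A \<Longrightarrow> b \<in> carrier A \<Longrightarrow> h \<in> carrier H \<Longrightarrow> act (a \<otimes>\<^bsub>A\<^esub> b) h = act a h \<otimes>\<^bsub>A\<^esub> act b h"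
  using rm unfolding right_module_def by blast
lemma act_1h[simp]: "a \<in> carrier A \<Longrightarrow> act a \<one>\<^bsub>H\<^esub> = a"
  using rm unfolding right_module_def by blast
lemma act_comp: "a \<in> carrier A \<Longrightarrow> h \<in> carrier H \<Longrightarrow> k \<in> carrier H \<Longrightarrow> act a (h \<otimes>\<^bsub>H\<^esub> k) = act (act a h) k"
  using rm unfolding right_module_def by blast
lemma act_hom: "h \<in> carrier H \<Longrightarrow> (\<lambda>a. act a h) \<in> hom A A"
  by (auto simp: hom_def act_mult)
lemma act_one[simp]: "h \<in> carrier H \<Longrightarrow> act \<one>\<^bsub>A\<^esub> h = \<one>\<^bsub>A\<^esub>"
  using group_hom.hom_one[of A A "\<lambda>a. act a h"] act_hom
  by (simp add: A.is_group group_hom.intro group_hom_axioms.intro)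
lemma act_inv[simp]: "a \<in> carrier A \<Longrightarrow> h \<in> carrier H \<Longrightarrow> act (inv\<^bsub>A\<^esub> a) h = inv\<^bsub>A\<^esub> (act a h)"
  using group_hom.hom_inv[of A A "\<lambda>a. act a h"] act_hom
  by (simp add: A.is_group group_hom.intro group_hom_axioms.intro)
lemma act_inv_cancel[simp]: "a \<in> carrier A \<Longrightarrow> h \<in> carrier H \<Longrightarrow> act (act a h) (inv\<^bsub>H\<^esub> h) = a"
  by (simp add: act_comp[symmetric])
lemma act_inv_cancel2[simp]: "a \<in> carrier A \<Longrightarrow> h \<in> carrier H \<Longrightarrow> act (act a (inv\<^bsub>H\<^esub> h)) h = a"
  by (simp add: act_comp[symmetric])

lemma carrier_G: "carrier G = carrier H \<times> W"
  by (simp add: semidirect_power_def)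
lemma mult_G[simp]: "(h, v) \<otimes>\<^bsub>G\<^esub> (k, w) = (h \<otimes>\<^bsub>H\<^esub> k, \<lambda>i\<in>{..<t}. act (v i) k \<otimes>\<^bsub>A\<^esub> w i)"
  by (simp add: semidirect_power_def)
lemma one_G: "\<one>\<^bsub>G\<^esub> = (\<one>\<^bsub>H\<^esub>, \<lambda>i\<in>{..<t}. \<one>\<^bsub>A\<^esub>)"
  by (simp add: semidirect_power_def)

lemma mem_G[simp]: "(h, v) \<in> carrier G \<longleftrightarrow> h \<in> carrier H \<and> v \<in> W"
  by (simp add: carrier_G)

lemma group_G: "group G"
proof (rule groupI)
  fix x y assume "x \<in> carrier G" "y \<in> carrier G"
  then show "x \<otimes>\<^bsub>G\<^esub> y \<in> carrier G"
    by (cases x; cases y) (auto simp: PiE_iff)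
next
  show "\<one>\<^bsub>G\<^esub> \<in> carrier G" by (auto simp: one_G)
next
  fix x y z assume "x \<in> carrier G" "y \<in> carrier G" "z \<in> carrier G"
  then show "x \<otimes>\<^bsub>G\<^esub> y \<otimes>\<^bsub>G\<^esub> z = x \<otimes>\<^bsub>G\<^esub> (y \<otimes>\<^bsub>G\<^esub> z)"
    by (cases x; cases y; cases z)
       (auto simp: PiE_iff H.m_assoc act_comp act_mult A.m_assoc intro!: restrict_ext)
next
  fix x assume "x \<in> carrier G"
  then show "\<one>\<^bsub>G\<^esub> \<otimes>\<^bsub>G\<^esub> x = x"
    proof (cases x)
    case (Pair h v)
    with \<open>x \<in> carrier G\<close> have "v \<in> W" by auto
    then have "(\<lambda>i\<in>{..<t}. v i) = v" using PiE_restrict by blast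
    with Pair \<open>x \<in> carrier G\<close> show ?thesis by (simp add: one_G PiE_iff cong: restrict_cong)
  qed
next
  fix x assume x: "x \<in> carrier G"
  then obtain h v where xe: "x = (h, v)" and h: "h \<in> carrier H" and v: "v \<in> W" by (cases x) auto
  let ?y = "(inv\<^bsub>H\<^esub> h, \<lambda>i\<in>{..<t}. inv\<^bsub>A\<^esub> (act (v i) (inv\<^bsub>H\<^esub> h)))"
  have "?y \<otimes>\<^bsub>G\<^esub> x = \<one>\<^bsub>G\<^esub>"
    using h v by (auto simp: xe one_G PiE_iff intro!: restrict_ext)
  moreover have "?y \<in> carrier G" using h v by (auto simp: PiE_iff)
  ultimately show "\<exists>y\<in>carrier G. y \<otimes>\<^bsub>G\<^esub> x = \<one>\<^bsub>G\<^esub>" by blast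
qed


sublocale GG: group G by (rule group_G)

lemma W_mem[simp]: "v \<in> W \<Longrightarrow> i < t \<Longrightarrow> v i \<in> carrier A"
  using PiE_mem by fastforce

lemma restrict_in_W: "(\<And>i. i < t \<Longrightarrow> f i \<in> carrier A) \<Longrightarrow> (\<lambda>i\<in>{..<t}. f i) \<in> W"
  by auto

lemma A_cancel1[simp]: "a \<in> carrier A \<Longrightarrow> u \<in> carrier A \<Longrightarrow> inv\<^bsub>A\<^esub> u \<otimes>\<^bsub>A\<^esub> (a \<otimes>\<^bsub>A\<^esub> u) = a"
  by (metis A.l_inv A.m_lcomm A.r_one A.inv_closed)

lemma A_cancel2[simp]: "a \<in> carrier A \<Longrightarrow> u \<in> carrier A \<Longrightarrow> u \<otimes>\<^bsub>A\<^esub> (inv\<^bsub>A\<^esub> u \<otimes>\<^bsub>A\<^esub> a) = a"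
  by (metis A.inv_closed A.l_one A.m_assoc A.r_inv)
lemma A_cancel3[simp]: "a \<in> carrier A \<Longrightarrow> u \<in> carrier A \<Longrightarrow> inv\<^bsub>A\<^esub> u \<otimes>\<^bsub>A\<^esub> (u \<otimes>\<^bsub>A\<^esub> a) = a"
  by (metis A.inv_closed A.l_one A.m_assoc A.l_inv)

lemma restrict_W: "v \<in> W \<Longrightarrow> (\<lambda>i\<in>{..<t}. v i) = v"
  using PiE_restrict by blast

lemma inv_G: "h \<in> carrier H \<Longrightarrow> v \<in> W \<Longrightarrow>
   inv\<^bsub>G\<^esub> (h, v) = (inv\<^bsub>H\<^esub> h, \<lambda>i\<in>{..<t}. inv\<^bsub>A\<^esub> (act (v i) (inv\<^bsub>H\<^esub> h)))"
proof (rule GG.inv_equality)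
  assume h: "h \<in> carrier H" and v: "v \<in> W"
  show "(inv\<^bsub>H\<^esub> h, \<lambda>i\<in>{..<t}. inv\<^bsub>A\<^esub> (act (v i) (inv\<^bsub>H\<^esub> h))) \<otimes>\<^bsub>G\<^esub> (h, v) = \<one>\<^bsub>G\<^esub>"
    apply (simp add: one_G h)
    apply (rule restrict_ext)
    using h v apply (simp add: A.l_inv)
    done
  show "(h, v) \<in> carrier G" using h v by simp
  show "(inv\<^bsub>H\<^esub> h, \<lambda>i\<in>{..<t}. inv\<^bsub>A\<^esub> (act (v i) (inv\<^bsub>H\<^esub> h))) \<in> carrier G"
    using h v by (simp add: PiE_iff)
qed

lemma mult_V: "h \<in> carrier H \<Longrightarrow> v \<in> W \<Longrightarrow> x \<in> W \<Longrightarrow> (h, v) \<otimes>\<^bsub>G\<^esub> (\<one>\<^bsub>H\<^esub>, x) = (h, \<lambda>i\<in>{..<t}. v i \<otimes>\<^bsub>A\<^esub> x i)"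
proof -
  assume "h \<in> carrier H" "v \<in> W" "x \<in> W"
  then have "(\<lambda>i\<in>{..<t}. act (v i) \<one>\<^bsub>H\<^esub> \<otimes>\<^bsub>A\<^esub> x i) = (\<lambda>i\<in>{..<t}. v i \<otimes>\<^bsub>A\<^esub> x i)"
    by (intro restrict_ext) simp
  with \<open>h \<in> carrier H\<close> show ?thesis by simp
qed

lemma conj_V: "h \<in> carrier H \<Longrightarrow> u \<in> W \<Longrightarrow> v \<in> W \<Longrightarrow>
  inv\<^bsub>G\<^esub> (h, u) \<otimes>\<^bsub>G\<^esub> (\<one>\<^bsub>H\<^esub>, v) \<otimes>\<^bsub>G\<^esub> (h, u) = (\<one>\<^bsub>H\<^esub>, \<lambda>i\<in>{..<t}. act (v i) h)"
proof -
  assume h: "h \<in> carrier H" and u: "u \<in> W" and v: "v \<in> W"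
  have e: "(\<lambda>i\<in>{..<t}. act (inv\<^bsub>A\<^esub> (act (u i) (inv\<^bsub>H\<^esub> h))) \<one>\<^bsub>H\<^esub> \<otimes>\<^bsub>A\<^esub> v i) = 
     (\<lambda>i\<in>{..<t}. inv\<^bsub>A\<^esub> (act (u i) (inv\<^bsub>H\<^esub> h)) \<otimes>\<^bsub>A\<^esub> v i)"
    using h u v by (intro restrict_ext) simp
  show ?thesis
    apply (simp add: inv_G h u v e)
    apply (rule restrict_ext)
    using h u v apply (simp add: act_mult A.m_comm)
    done
qed

definition Pk :: "'h set \<Rightarrow> ('h \<times> (nat \<Rightarrow> 'a)) set" where "Pk K = K \<times> W"

lemma Pk_subgroup: "subgroup K H \<Longrightarrow> subgroup (Pk K) G"
proof (rule GG.subgroupI)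
  assume K: "subgroup K H"
  then have KH: "\<And>k. k \<in> K \<Longrightarrow> k \<in> carrier H" using subgroup.mem_carrier[OF K] by simp
  show "Pk K \<subseteq> carrier G" using KH by (auto simp: Pk_def)
  have "(\<one>\<^bsub>H\<^esub>, \<lambda>i\<in>{..<t}. \<one>\<^bsub>A\<^esub>) \<in> Pk K"
    using subgroup.one_closed[OF K] by (simp add: Pk_def)
  then show "Pk K \<noteq> {}" by blast
  fix a assume a: "a \<in> Pk K" 
  then obtain h v where av: "a = (h, v)" "h \<in> K" "v \<in> W" unfolding Pk_def by (cases a) blast
  then have "inv\<^bsub>G\<^esub> a = (inv\<^bsub>H\<^esub> h, \<lambda>i\<in>{..<t}. inv\<^bsub>A\<^esub> (act (v i) (inv\<^bsub>H\<^esub> h)))"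
    using KH by (simp add: inv_G)
  moreover have "inv\<^bsub>H\<^esub> h \<in> K" using subgroup.m_inv_closed[OF K av(2)] .
  moreover have "(\<lambda>i\<in>{..<t}. inv\<^bsub>A\<^esub> (act (v i) (inv\<^bsub>H\<^esub> h))) \<in> W"
    using av KH by (intro restrict_in_W) simp
  ultimately show "inv\<^bsub>G\<^esub> a \<in> Pk K" by (simp add: Pk_def)
next
  fix a b assume K: "subgroup K H" and a: "a \<in> Pk K" and b: "b \<in> Pk K"
  then have KH: "\<And>k. k \<in> K \<Longrightarrow> k \<in> carrier H" using subgroup.mem_carrier[OF K] by simp
  from a obtain h v where av: "a = (h, v)" "h \<in> K" "v \<in> W" unfolding Pk_def by (cases a) blast
  from b obtain k w where bw: "b = (k, w)" "k \<in> K" "w \<in> W" unfolding Pk_def by (cases b) blast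
  have "h \<otimes>\<^bsub>H\<^esub> k \<in> K" using subgroup.m_closed[OF K av(2) bw(2)] .
  moreover have "(\<lambda>i\<in>{..<t}. act (v i) k \<otimes>\<^bsub>A\<^esub> w i) \<in> W"
    using av bw KH by (intro restrict_in_W) simp
  ultimately show "a \<otimes>\<^bsub>G\<^esub> b \<in> Pk K" by (simp add: Pk_def av bw)
qed

definition Vs :: "('h \<times> (nat \<Rightarrow> 'a)) set" where "Vs = {\<one>\<^bsub>H\<^esub>} \<times> W"

lemma sub_G: "subgroup L G \<Longrightarrow> x \<in> L \<Longrightarrow> x \<in> carrier G"
  by (rule subgroup.mem_carrier)

lemma sub_pair: "subgroup L G \<Longrightarrow> (h, v) \<in> L \<Longrightarrow> h \<in> carrier H \<and> v \<in> W"
  using sub_G[of L "(h, v)"] by simp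

lemma fst_mem: "x \<in> L \<Longrightarrow> fst x \<in> fst ` L"
  by (rule imageI)

lemma fst_subgroup: "subgroup L G \<Longrightarrow> subgroup (fst ` L) H"
proof (rule H.subgroupI)
  assume L: "subgroup L G"
  show "fst ` L \<subseteq> carrier H"
  proof
    fix a assume "a \<in> fst ` L"
    then obtain x where "x \<in> L" "a = fst x" by (rule imageE)
    then have "x \<in> carrier G" "a = fst x" using sub_G[OF L] by simp_all
    then show "a \<in> carrier H" unfolding carrier_G by (simp add: mem_Times_iff)
  qed
  have "\<one>\<^bsub>G\<^esub> \<in> L" using subgroup.one_closed[OF L] .
  then show "fst ` L \<noteq> {}" by (rule_tac notI) simp
  fix a assume "a \<in> fst ` L"
  then obtain x where x: "x \<in> L" "a = fst x" by (rule imageE)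
  then obtain v where av: "(a, v) \<in> L" by (cases x) simp
  then have "a \<in> carrier H" "v \<in> W" using sub_pair[OF L] by auto
  then have e: "inv\<^bsub>G\<^esub> (a, v) = (inv\<^bsub>H\<^esub> a, \<lambda>i\<in>{..<t}. inv\<^bsub>A\<^esub> (act (v i) (inv\<^bsub>H\<^esub> a)))" by (rule inv_G)
  have "inv\<^bsub>G\<^esub> (a, v) \<in> L" by (rule subgroup.m_inv_closed[OF L av])
  then have "fst (inv\<^bsub>G\<^esub> (a, v)) \<in> fst ` L" by (rule imageI)
  then show "inv\<^bsub>H\<^esub> a \<in> fst ` L" unfolding e by simp
next
  fix a b assume L: "subgroup L G" and a: "a \<in> fst ` L" and b: "b \<in> fst ` L"
  from a obtain x where x: "x \<in> L" "a = fst x" by (rule imageE)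
  then obtain v where av: "(a, v) \<in> L" by (cases x) simp
  from b obtain y where y: "y \<in> L" "b = fst y" by (rule imageE)
  then obtain w where bw: "(b, w) \<in> L" by (cases y) simp
  have "(a, v) \<otimes>\<^bsub>G\<^esub> (b, w) \<in> L" by (rule subgroup.m_closed[OF L av bw])
  then have "fst ((a, v) \<otimes>\<^bsub>G\<^esub> (b, w)) \<in> fst ` L" by (rule imageI)
  then show "a \<otimes>\<^bsub>H\<^esub> b \<in> fst ` L" by simp
qed

lemma fiber_shift: "subgroup L G \<Longrightarrow> (h, v) \<in> L \<Longrightarrow> (\<one>\<^bsub>H\<^esub>, x) \<in> L \<Longrightarrow> (h, \<lambda>i\<in>{..<t}. v i \<otimes>\<^bsub>A\<^esub> x i) \<in> L"
proof -
  assume L: "subgroup L G" and hv: "(h, v) \<in> L" and x: "(\<one>\<^bsub>H\<^esub>, x) \<in> L"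
  have m: "(h, v) \<otimes>\<^bsub>G\<^esub> (\<one>\<^bsub>H\<^esub>, x) \<in> L" by (rule subgroup.m_closed[OF L hv x])
  have "h \<in> carrier H" "v \<in> W" using sub_pair[OF L hv] by auto
  moreover have "x \<in> W" using sub_pair[OF L x] by auto
  ultimately have eq: "(h, v) \<otimes>\<^bsub>G\<^esub> (\<one>\<^bsub>H\<^esub>, x) = (h, \<lambda>i\<in>{..<t}. v i \<otimes>\<^bsub>A\<^esub> x i)" by (rule mult_V)
  from m show ?thesis unfolding eq .
qed

lemma W_eqI: "v \<in> W \<Longrightarrow> w \<in> W \<Longrightarrow> (\<And>i. i < t \<Longrightarrow> v i = w i) \<Longrightarrow> v = w"
  by (metis PiE_ext lessThan_iff)

lemma Vs_sub_eq: "subgroup L G \<Longrightarrow> Vs \<subseteq> L \<Longrightarrow> L = Pk (fst ` L)"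
proof
  assume L: "subgroup L G" and V: "Vs \<subseteq> L"
  show "L \<subseteq> Pk (fst ` L)"
  proof
    fix x assume "x \<in> L"
    then show "x \<in> Pk (fst ` L)" using sub_pair[OF L] by (cases x) (force simp: Pk_def)
  qed
  show "Pk (fst ` L) \<subseteq> L"
  proof
    fix x assume "x \<in> Pk (fst ` L)"
    then obtain h v w where x: "x = (h, w)" and hv: "(h, v) \<in> L" and w: "w \<in> W"
      unfolding Pk_def by (cases x) force
    have v: "v \<in> W" "h \<in> carrier H" using sub_pair[OF L hv] by auto
    let ?y = "\<lambda>i\<in>{..<t}. inv\<^bsub>A\<^esub> (v i) \<otimes>\<^bsub>A\<^esub> w i"
    have "?y \<in> W" using v w by (intro restrict_in_W) simp
    then have "(\<one>\<^bsub>H\<^esub>, ?y) \<in> L" using V unfolding Vs_def by blast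
    from fiber_shift[OF L hv this] have "(h, \<lambda>i\<in>{..<t}. v i \<otimes>\<^bsub>A\<^esub> ?y i) \<in> L" .
    moreover have "(\<lambda>i\<in>{..<t}. v i \<otimes>\<^bsub>A\<^esub> ?y i) = w"
      using v w by (intro W_eqI restrict_in_W) simp_all
    ultimately show "x \<in> L" by (simp add: x)
  qed
qed

lemma W_ne: "(\<lambda>i\<in>{..<t}. \<one>\<^bsub>A\<^esub>) \<in> W"
  by (intro restrict_in_W) simp

lemma Pk_maximal: "maximal_subgroup K H \<Longrightarrow> maximal_subgroup (Pk K) G"
  unfolding maximal_subgroup_def
proof (intro conjI allI impI)
  assume K: "subgroup K H \<and> K \<noteq> carrier H \<and> (\<forall>K'. subgroup K' H \<and> K \<subseteq> K' \<longrightarrow> K' = K \<or> K' = carrier H)"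
  then have Ks: "subgroup K H" and Kne: "K \<noteq> carrier H" and Km: "\<And>K'. subgroup K' H \<Longrightarrow> K \<subseteq> K' \<Longrightarrow> K' = K \<or> K' = carrier H"
    by auto
  show "subgroup (Pk K) G" by (rule Pk_subgroup[OF Ks])
  let ?w = "\<lambda>i\<in>{..<t}. \<one>\<^bsub>A\<^esub>"
  have "K \<subseteq> carrier H" by (rule subgroup.subset[OF Ks])
  with Kne obtain h where "h \<in> carrier H" "h \<notin> K" by blast
  then have "(h, ?w) \<in> carrier G" "(h, ?w) \<notin> Pk K" using W_ne by (simp_all add: Pk_def)
  then show "Pk K \<noteq> carrier G" by blast
  fix L assume L: "subgroup L G \<and> Pk K \<subseteq> L"
  then have Ls: "subgroup L G" and PL: "Pk K \<subseteq> L" by simp_all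
  have "\<one>\<^bsub>H\<^esub> \<in> K" by (rule subgroup.one_closed[OF Ks])
  then have "Vs \<subseteq> Pk K" unfolding Vs_def Pk_def by (intro Sigma_mono) simp_all
  then have Leq: "L = Pk (fst ` L)" using PL by (intro Vs_sub_eq[OF Ls]) simp
  have "K \<subseteq> fst ` L"
  proof
    fix k assume "k \<in> K" then have "(k, ?w) \<in> Pk K" using W_ne by (simp add: Pk_def)
    then have "(k, ?w) \<in> L" using PL by (rule subsetD[rotated])
    then have "fst (k, ?w) \<in> fst ` L" by (rule imageI)
    then show "k \<in> fst ` L" by simp
  qed
  then have "fst ` L = K \<or> fst ` L = carrier H" by (rule Km[OF fst_subgroup[OF Ls]])
  then show "L = Pk K \<or> L = carrier G"
  proof
    assume "fst ` L = K" then show ?thesis using Leq by simp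
  next
    assume "fst ` L = carrier H" then show ?thesis using Leq by (simp add: Pk_def carrier_G)
  qed
qed


definition setj :: "(nat \<Rightarrow> 'a) \<Rightarrow> nat \<Rightarrow> 'a \<Rightarrow> (nat \<Rightarrow> 'a)" where
  "setj v j a = (\<lambda>i\<in>{..<t}. if i = j then a else v i)"

definition ej :: "nat \<Rightarrow> 'a \<Rightarrow> (nat \<Rightarrow> 'a)" where
  "ej j a = (\<lambda>i\<in>{..<t}. if i = j then a else \<one>\<^bsub>A\<^esub>)"

lemma setj_W: "v \<in> W \<Longrightarrow> a \<in> carrier A \<Longrightarrow> setj v j a \<in> W"
  unfolding setj_def by (intro restrict_in_W) simp

lemma ej_W: "a \<in> carrier A \<Longrightarrow> ej j a \<in> W"
  unfolding ej_def by (intro restrict_in_W) simp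

lemma ej_one: "ej j \<one>\<^bsub>A\<^esub> = (\<lambda>i\<in>{..<t}. \<one>\<^bsub>A\<^esub>)"
  unfolding ej_def by (intro restrict_ext) simp

lemma ej_app: "i < t \<Longrightarrow> ej j a i = (if i = j then a else \<one>\<^bsub>A\<^esub>)"
  unfolding ej_def by simp

lemma setj_app: "i < t \<Longrightarrow> setj v j a i = (if i = j then a else v i)"
  unfolding setj_def by simp

lemma inv_mult_same: "h \<in> carrier H \<Longrightarrow> v \<in> W \<Longrightarrow> w \<in> W \<Longrightarrow>
  inv\<^bsub>G\<^esub> (h, v) \<otimes>\<^bsub>G\<^esub> (h, w) = (\<one>\<^bsub>H\<^esub>, \<lambda>i\<in>{..<t}. inv\<^bsub>A\<^esub> (v i) \<otimes>\<^bsub>A\<^esub> w i)"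
  apply (simp add: inv_G)
  apply (rule restrict_ext)
  apply simp
  done

lemma ej_mult: "a \<in> carrier A \<Longrightarrow> b \<in> carrier A \<Longrightarrow>
   (\<one>\<^bsub>H\<^esub>, ej j a) \<otimes>\<^bsub>G\<^esub> (\<one>\<^bsub>H\<^esub>, ej j b) = (\<one>\<^bsub>H\<^esub>, ej j (a \<otimes>\<^bsub>A\<^esub> b))"
  apply (simp add: ej_W)
  apply (unfold ej_def)
  apply (rule restrict_ext)
  apply simp
  done

lemma ej_inv: "a \<in> carrier A \<Longrightarrow> inv\<^bsub>G\<^esub> (\<one>\<^bsub>H\<^esub>, ej j a) = (\<one>\<^bsub>H\<^esub>, ej j (inv\<^bsub>A\<^esub> a))"
  apply (simp add: inv_G ej_W)
  apply (unfold ej_def)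
  apply (rule restrict_ext)
  apply simp
  done

lemma ej_conj: "a \<in> carrier A \<Longrightarrow> h \<in> carrier H \<Longrightarrow> u \<in> W \<Longrightarrow>
   inv\<^bsub>G\<^esub> (h, u) \<otimes>\<^bsub>G\<^esub> (\<one>\<^bsub>H\<^esub>, ej j a) \<otimes>\<^bsub>G\<^esub> (h, u) = (\<one>\<^bsub>H\<^esub>, ej j (act a h))"
  apply (subst conj_V)
     apply (simp_all add: ej_W)
  apply (unfold ej_def)
  apply (rule restrict_ext)
  apply simp
  done

section \<open>derivations\<close>

lemma der_closed: "\<delta> \<in> derivations H A act \<Longrightarrow> h \<in> carrier H \<Longrightarrow> \<delta> h \<in> carrier A"
  unfolding derivations_def using PiE_mem by fastforce

lemma der_mult: "\<delta> \<in> derivations H A act \<Longrightarrow> h \<in> carrier H \<Longrightarrow> k \<in> carrier H \<Longrightarrow>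
   \<delta> (h \<otimes>\<^bsub>H\<^esub> k) = act (\<delta> h) k \<otimes>\<^bsub>A\<^esub> \<delta> k"
  unfolding derivations_def by simp

lemma der_one: "\<delta> \<in> derivations H A act \<Longrightarrow> \<delta> \<one>\<^bsub>H\<^esub> = \<one>\<^bsub>A\<^esub>"
proof -
  assume d: "\<delta> \<in> derivations H A act"
  have c: "\<delta> \<one>\<^bsub>H\<^esub> \<in> carrier A" by (rule der_closed[OF d]) simp
  have "\<delta> \<one>\<^bsub>H\<^esub> = \<delta> \<one>\<^bsub>H\<^esub> \<otimes>\<^bsub>A\<^esub> \<delta> \<one>\<^bsub>H\<^esub>"
    using der_mult[OF d, of "\<one>\<^bsub>H\<^esub>" "\<one>\<^bsub>H\<^esub>"] c by simp
  then show ?thesis using c by (metis A.l_cancel_one A.one_closed A.r_one)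
qed

lemma der_inv: "\<delta> \<in> derivations H A act \<Longrightarrow> h \<in> carrier H \<Longrightarrow>
   \<delta> (inv\<^bsub>H\<^esub> h) = inv\<^bsub>A\<^esub> (act (\<delta> h) (inv\<^bsub>H\<^esub> h))"
proof -
  assume d: "\<delta> \<in> derivations H A act" and h: "h \<in> carrier H"
  have c1: "\<delta> h \<in> carrier A" by (rule der_closed[OF d h])
  have c2: "\<delta> (inv\<^bsub>H\<^esub> h) \<in> carrier A" by (rule der_closed[OF d]) (simp add: h)
  have "\<one>\<^bsub>A\<^esub> = act (\<delta> h) (inv\<^bsub>H\<^esub> h) \<otimes>\<^bsub>A\<^esub> \<delta> (inv\<^bsub>H\<^esub> h)"
    using der_mult[OF d h, of "inv\<^bsub>H\<^esub> h"] der_one[OF d] h by simp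
  then show ?thesis using c1 c2 h
    by (metis A.inv_equality A.m_comm act_closed H.inv_closed)
qed

definition Md :: "nat \<Rightarrow> ('h \<Rightarrow> 'a) \<Rightarrow> ('h \<times> (nat \<Rightarrow> 'a)) set" where
  "Md j \<delta> = {x \<in> carrier G. snd x j = \<delta> (fst x)}"

lemma Md_mem: "(h, v) \<in> Md j \<delta> \<longleftrightarrow> h \<in> carrier H \<and> v \<in> W \<and> v j = \<delta> h"
  unfolding Md_def by simp

lemma Md_subgroup: "\<delta> \<in> derivations H A act \<Longrightarrow> j < t \<Longrightarrow> subgroup (Md j \<delta>) G"
proof (rule GG.subgroupI)
  assume d: "\<delta> \<in> derivations H A act" and j: "j < t"
  show "Md j \<delta> \<subseteq> carrier G" unfolding Md_def by blast
  have "\<one>\<^bsub>G\<^esub> \<in> Md j \<delta>" using j der_one[OF d] W_ne by (simp add: one_G Md_mem)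
  then show "Md j \<delta> \<noteq> {}" by blast
  fix a assume a: "a \<in> Md j \<delta>"
  then obtain h v where av: "a = (h, v)" by (cases a)
  with a have h: "h \<in> carrier H" and v: "v \<in> W" and vj: "v j = \<delta> h" by (simp_all add: Md_mem)
  have "inv\<^bsub>G\<^esub> a = (inv\<^bsub>H\<^esub> h, \<lambda>i\<in>{..<t}. inv\<^bsub>A\<^esub> (act (v i) (inv\<^bsub>H\<^esub> h)))"
    unfolding av by (rule inv_G[OF h v])
  moreover have "(\<lambda>i\<in>{..<t}. inv\<^bsub>A\<^esub> (act (v i) (inv\<^bsub>H\<^esub> h))) \<in> W"
    using h v by (intro restrict_in_W) simp
  ultimately show "inv\<^bsub>G\<^esub> a \<in> Md j \<delta>" using h j vj der_inv[OF d h] by (simp add: Md_mem)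
next
  fix a b assume d: "\<delta> \<in> derivations H A act" and j: "j < t" and a: "a \<in> Md j \<delta>" and b: "b \<in> Md j \<delta>"
  obtain h v where av: "a = (h, v)" by (cases a)
  with a have h: "h \<in> carrier H" and v: "v \<in> W" and vj: "v j = \<delta> h" by (simp_all add: Md_mem)
  obtain k w where bw: "b = (k, w)" by (cases b)
  with b have k: "k \<in> carrier H" and w: "w \<in> W" and wj: "w j = \<delta> k" by (simp_all add: Md_mem)
  have "(\<lambda>i\<in>{..<t}. act (v i) k \<otimes>\<^bsub>A\<^esub> w i) \<in> W" using v w k by (intro restrict_in_W) simp
  then show "a \<otimes>\<^bsub>G\<^esub> b \<in> Md j \<delta>"
    using h k j vj wj der_mult[OF d h k] by (simp add: Md_mem av bw)
qed


lemma irr_use: "subgroup B A \<Longrightarrow> (\<And>b h. b \<in> B \<Longrightarrow> h \<in> carrier H \<Longrightarrow> act b h \<in> B) \<Longrightarrow>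
   B = {\<one>\<^bsub>A\<^esub>} \<or> B = carrier A"
  using irr unfolding irreducible_module_def by blast

lemma A_nontriv: "\<exists>a \<in> carrier A. a \<noteq> \<one>\<^bsub>A\<^esub>"
proof -
  have "carrier A \<noteq> {\<one>\<^bsub>A\<^esub>}" using irr unfolding irreducible_module_def by blast
  then show ?thesis using A.one_closed by blast
qed

lemma ej_all: 
  assumes L: "subgroup L G" and j: "j < t"
    and a0: "a0 \<in> carrier A" "a0 \<noteq> \<one>\<^bsub>A\<^esub>" "(\<one>\<^bsub>H\<^esub>, ej j a0) \<in> L"
    and full: "\<And>h. h \<in> carrier H \<Longrightarrow> \<exists>u. (h, u) \<in> L"
    and a: "a \<in> carrier A"
  shows "(\<one>\<^bsub>H\<^esub>, ej j a) \<in> L"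
proof -
  define B where "B = {a \<in> carrier A. (\<one>\<^bsub>H\<^esub>, ej j a) \<in> L}"
  have sB: "subgroup B A"
  proof (rule A.subgroupI)
    show "B \<subseteq> carrier A" unfolding B_def by blast
    have "\<one>\<^bsub>G\<^esub> \<in> L" by (rule subgroup.one_closed[OF L])
    then have "\<one>\<^bsub>A\<^esub> \<in> B" unfolding B_def by (simp add: ej_one one_G)
    then show "B \<noteq> {}" by blast
    fix b assume b: "b \<in> B"
    then have "inv\<^bsub>G\<^esub> (\<one>\<^bsub>H\<^esub>, ej j b) \<in> L" unfolding B_def by (simp add: subgroup.m_inv_closed[OF L])
    then show "inv\<^bsub>A\<^esub> b \<in> B" using b unfolding B_def by (simp add: ej_inv)
  next
    fix b c assume b: "b \<in> B" and c: "c \<in> B"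
    then have "(\<one>\<^bsub>H\<^esub>, ej j b) \<otimes>\<^bsub>G\<^esub> (\<one>\<^bsub>H\<^esub>, ej j c) \<in> L"
      unfolding B_def by (simp add: subgroup.m_closed[OF L] del: mult_G)
    then show "b \<otimes>\<^bsub>A\<^esub> c \<in> B" using b c unfolding B_def by (simp add: ej_mult del: mult_G)
  qed
  have inv: "act b h \<in> B" if b: "b \<in> B" and h: "h \<in> carrier H" for b h
  proof -
    obtain u where u: "(h, u) \<in> L" using full[OF h] by blast
    then have uW: "u \<in> W" using sub_pair[OF L u] by simp
    have bL: "(\<one>\<^bsub>H\<^esub>, ej j b) \<in> L" "b \<in> carrier A" using b unfolding B_def by simp_all
    have "inv\<^bsub>G\<^esub> (h, u) \<otimes>\<^bsub>G\<^esub> (\<one>\<^bsub>H\<^esub>, ej j b) \<otimes>\<^bsub>G\<^esub> (h, u) \<in> L"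
      using u bL(1) by (simp add: subgroup.m_closed[OF L] subgroup.m_inv_closed[OF L] del: mult_G)
    then have "(\<one>\<^bsub>H\<^esub>, ej j (act b h)) \<in> L" using ej_conj[OF bL(2) h uW] by simp
    then show ?thesis unfolding B_def using bL(2) h by simp
  qed
  have "a0 \<in> B" using a0 unfolding B_def by simp
  then have "B = carrier A" using irr_use[OF sB inv] a0(2) by blast
  then show ?thesis using a unfolding B_def by blast
qed

lemma Md_maximal: "\<delta> \<in> derivations H A act \<Longrightarrow> j < t \<Longrightarrow> maximal_subgroup (Md j \<delta>) G"
  unfolding maximal_subgroup_def
proof (intro conjI allI impI)
  assume d: "\<delta> \<in> derivations H A act" and j: "j < t"
  show sM: "subgroup (Md j \<delta>) G" by (rule Md_subgroup[OF d j])
  obtain a where a: "a \<in> carrier A" "a \<noteq> \<one>\<^bsub>A\<^esub>" using A_nontriv by blast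
  have "(\<one>\<^bsub>H\<^esub>, ej j a) \<in> carrier G" using ej_W[OF a(1)] by simp
  moreover have "(\<one>\<^bsub>H\<^esub>, ej j a) \<notin> Md j \<delta>" using a j der_one[OF d] by (simp add: Md_mem ej_app)
  ultimately show "Md j \<delta> \<noteq> carrier G" by blast
  fix L assume "subgroup L G \<and> Md j \<delta> \<subseteq> L"
  then have L: "subgroup L G" and MsubL: "Md j \<delta> \<subseteq> L" by simp_all
  have inM: "(h, setj v j (\<delta> h)) \<in> Md j \<delta>" if "h \<in> carrier H" "v \<in> W" for h v
    using that j setj_W[of v "\<delta> h" j] der_closed[OF d, of h] by (simp add: Md_mem setj_app)
  show "L = Md j \<delta> \<or> L = carrier G"
  proof (cases "L \<subseteq> Md j \<delta>")
    case True then show ?thesis using MsubL by blast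
  next
    case False
    then obtain x where xL: "x \<in> L" and xM: "x \<notin> Md j \<delta>" by blast
    obtain h v where xe: "x = (h, v)" by (cases x)
    have h: "h \<in> carrier H" and v: "v \<in> W" using sub_pair[OF L] xL xe by auto
    have vj: "v j \<noteq> \<delta> h" using xM h v by (simp add: xe Md_mem)
    have dh: "\<delta> h \<in> carrier A" by (rule der_closed[OF d h])
    have vjA: "v j \<in> carrier A" using v j by simp
    let ?a0 = "inv\<^bsub>A\<^esub> (\<delta> h) \<otimes>\<^bsub>A\<^esub> v j"
    have a0: "?a0 \<in> carrier A" using dh vjA by simp
    have a0ne: "?a0 \<noteq> \<one>\<^bsub>A\<^esub>"
    proof
      assume "?a0 = \<one>\<^bsub>A\<^esub>"
      then have "v j = \<delta> h" using dh vjA by (metis A.inv_closed A.inv_inv A.inv_equality A.m_comm)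
      then show False using vj by simp
    qed
    have hL: "(h, setj v j (\<delta> h)) \<in> L" using inM[OF h v] MsubL by blast
    have "inv\<^bsub>G\<^esub> (h, setj v j (\<delta> h)) \<otimes>\<^bsub>G\<^esub> (h, v) \<in> L"
      using hL xL xe by (simp add: subgroup.m_closed[OF L] subgroup.m_inv_closed[OF L] del: mult_G)
    moreover have "inv\<^bsub>G\<^esub> (h, setj v j (\<delta> h)) \<otimes>\<^bsub>G\<^esub> (h, v) = (\<one>\<^bsub>H\<^esub>, ej j ?a0)"
      apply (subst inv_mult_same[OF h setj_W[OF v dh] v])
      apply (simp add: ej_def)
      apply (rule restrict_ext)
      using v apply (simp add: setj_app)
      done
    ultimately have a0L: "(\<one>\<^bsub>H\<^esub>, ej j ?a0) \<in> L" by simp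
    have full: "\<exists>u. (k, u) \<in> L" if "k \<in> carrier H" for k
      using inM[OF that W_ne] MsubL by blast
    have all: "(\<one>\<^bsub>H\<^esub>, ej j b) \<in> L" if "b \<in> carrier A" for b
      by (rule ej_all[OF L j a0 a0ne a0L full that])
    have "carrier G \<subseteq> L"
    proof
      fix y assume y: "y \<in> carrier G"
      obtain k w where ye: "y = (k, w)" by (cases y)
      have k: "k \<in> carrier H" and w: "w \<in> W" using y ye by simp_all
      have dk: "\<delta> k \<in> carrier A" by (rule der_closed[OF d k])
      have wjA: "w j \<in> carrier A" using w j by simp
      have kL: "(k, setj w j (\<delta> k)) \<in> L" using inM[OF k w] MsubL by blast
      have eL: "(\<one>\<^bsub>H\<^esub>, ej j (inv\<^bsub>A\<^esub> (\<delta> k) \<otimes>\<^bsub>A\<^esub> w j)) \<in> L" using all dk wjA by simp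
      have "(k, \<lambda>i\<in>{..<t}. setj w j (\<delta> k) i \<otimes>\<^bsub>A\<^esub> ej j (inv\<^bsub>A\<^esub> (\<delta> k) \<otimes>\<^bsub>A\<^esub> w j) i) \<in> L"
        by (rule fiber_shift[OF L kL eL])
      moreover have "(\<lambda>i\<in>{..<t}. setj w j (\<delta> k) i \<otimes>\<^bsub>A\<^esub> ej j (inv\<^bsub>A\<^esub> (\<delta> k) \<otimes>\<^bsub>A\<^esub> w j) i) = w"
        apply (rule W_eqI)
          apply (rule restrict_in_W)
        using w dk wjA apply (simp add: setj_app ej_app)
        using w apply simp
        using w dk wjA apply (simp add: setj_app ej_app)
        done
      ultimately show "y \<in> L" using ye by simp
    qed
    then show ?thesis using subgroup.subset[OF L] by blast
  qed
qed


section \<open>sigma\<close>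

definition innerd :: "'a \<Rightarrow> 'h \<Rightarrow> 'a" where
  "innerd a = (\<lambda>h\<in>carrier H. act a h \<otimes>\<^bsub>A\<^esub> inv\<^bsub>A\<^esub> a)"

lemma innerd_der: "a \<in> carrier A \<Longrightarrow> innerd a \<in> derivations H A act"
  unfolding derivations_def innerd_def
proof (intro CollectI conjI ballI)
  assume a: "a \<in> carrier A"
  show "(\<lambda>h\<in>carrier H. act a h \<otimes>\<^bsub>A\<^esub> inv\<^bsub>A\<^esub> a) \<in> carrier H \<rightarrow>\<^sub>E carrier A"
    using a by simp
  fix h k assume h: "h \<in> carrier H" and k: "k \<in> carrier H"
  have "act a (h \<otimes>\<^bsub>H\<^esub> k) \<otimes>\<^bsub>A\<^esub> inv\<^bsub>A\<^esub> a
     = act (act a h \<otimes>\<^bsub>A\<^esub> inv\<^bsub>A\<^esub> a) k \<otimes>\<^bsub>A\<^esub> (act a k \<otimes>\<^bsub>A\<^esub> inv\<^bsub>A\<^esub> a)"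
    using a h k by (simp add: act_mult act_comp A.m_assoc)
  then show "(\<lambda>h\<in>carrier H. act a h \<otimes>\<^bsub>A\<^esub> inv\<^bsub>A\<^esub> a) (h \<otimes>\<^bsub>H\<^esub> k) =
         act ((\<lambda>h\<in>carrier H. act a h \<otimes>\<^bsub>A\<^esub> inv\<^bsub>A\<^esub> a) h) k \<otimes>\<^bsub>A\<^esub> (\<lambda>h\<in>carrier H. act a h \<otimes>\<^bsub>A\<^esub> inv\<^bsub>A\<^esub> a) k"
    using h k by simp
qed

lemma innerd_kernel: "a \<in> carrier A \<Longrightarrow> der_kernel H A (innerd a) = {h \<in> carrier H. act a h = a}"
proof -
  assume a: "a \<in> carrier A"
  have "act a h \<otimes>\<^bsub>A\<^esub> inv\<^bsub>A\<^esub> a = \<one>\<^bsub>A\<^esub> \<longleftrightarrow> act a h = a" if "h \<in> carrier H" for h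
    using a that by (metis A.inv_closed A.inv_equality A.inv_inv A.m_comm act_closed A.r_inv)
  then show ?thesis unfolding der_kernel_def innerd_def by auto
qed

lemma faithful_use: "h \<in> carrier H \<Longrightarrow> (\<And>a. a \<in> carrier A \<Longrightarrow> act a h = a) \<Longrightarrow> h = \<one>\<^bsub>H\<^esub>"
  using faith unfolding faithful_module_def by blast

lemma sigma_exists: "\<exists>F. F \<subseteq> Lambda H A act \<and> finite F \<and> card F = n \<and> carrier H \<inter> \<Inter>F = {\<one>\<^bsub>H\<^esub>}"
  if "n = card ((\<lambda>a. der_kernel H A (innerd a)) ` carrier A)" for n
proof (intro exI conjI)
  let ?F = "(\<lambda>a. der_kernel H A (innerd a)) ` carrier A"
  show "?F \<subseteq> Lambda H A act" unfolding Lambda_def using innerd_der by blast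
  show "finite ?F" using finA by simp
  show "card ?F = n" using that by simp
  show "carrier H \<inter> \<Inter>?F = {\<one>\<^bsub>H\<^esub>}"
  proof
    show "carrier H \<inter> \<Inter>?F \<subseteq> {\<one>\<^bsub>H\<^esub>}"
    proof
      fix h assume h: "h \<in> carrier H \<inter> \<Inter>?F"
      then have "act a h = a" if "a \<in> carrier A" for a using that innerd_kernel by blast
      then have "h = \<one>\<^bsub>H\<^esub>" using h by (intro faithful_use) simp_all
      then show "h \<in> {\<one>\<^bsub>H\<^esub>}" by simp
    qed
    show "{\<one>\<^bsub>H\<^esub>} \<subseteq> carrier H \<inter> \<Inter>?F" using innerd_kernel by simp
  qed
qed

lemma sigma_wit: "\<exists>F. F \<subseteq> Lambda H A act \<and> finite F \<and> card F = sigma H A act \<and> carrier H \<inter> \<Inter>F = {\<one>\<^bsub>H\<^esub>}"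
  unfolding sigma_def by (rule LeastI_ex) (use sigma_exists in blast)

lemma sigma_le: "F \<subseteq> Lambda H A act \<Longrightarrow> finite F \<Longrightarrow> carrier H \<inter> \<Inter>F = {\<one>\<^bsub>H\<^esub>} \<Longrightarrow> sigma H A act \<le> card F"
  unfolding sigma_def by (rule Least_le) blast

lemma fixed_finprod: "finite I \<Longrightarrow> g \<in> I \<rightarrow> carrier A \<Longrightarrow> h \<in> carrier H \<Longrightarrow> (\<And>i. i \<in> I \<Longrightarrow> act (g i) h = g i)
   \<Longrightarrow> act (finprod A g I) h = finprod A g I"
proof (induction I rule: finite_induct)
  case empty
  then show ?case by simp
next
  case (insert x F)
  then have g: "g \<in> F \<rightarrow> carrier A" "g x \<in> carrier A" by auto
  then have "finprod A g (insert x F) = g x \<otimes>\<^bsub>A\<^esub> finprod A g F" using insert by simp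
  moreover have "act (g x \<otimes>\<^bsub>A\<^esub> finprod A g F) h = g x \<otimes>\<^bsub>A\<^esub> finprod A g F"
    using insert g by (simp add: act_mult)
  ultimately show ?case by simp
qed

definition idA where "idA = (\<lambda>x\<in>carrier A. x)"
definition zeroA where "zeroA = (\<lambda>x\<in>carrier A. \<one>\<^bsub>A\<^esub>)"

lemma idA_End: "idA \<in> End_H H A act"
  unfolding End_H_def idA_def by (simp add: hom_def)

lemma zeroA_End: "zeroA \<in> End_H H A act"
  unfolding End_H_def zeroA_def by (simp add: hom_def)

lemma dim_exists: "\<exists>as. length as = n \<and> set as \<subseteq> carrier A \<and>
      (\<forall>a\<in>carrier A. \<exists>\<phi>s. length \<phi>s = n \<and> set \<phi>s \<subseteq> End_H H A act \<and>
          a = finprod A (\<lambda>i. (\<phi>s ! i) (as ! i)) {..<n})"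
  if "n = length (SOME xs. set xs = carrier A \<and> distinct xs)" for n
proof -
  obtain xs where xs: "set xs = carrier A" "distinct xs" using finite_distinct_list[OF finA] by blast
  define as where "as = (SOME xs. set xs = carrier A \<and> distinct xs)"
  have as: "set as = carrier A" unfolding as_def by (rule someI2[of _ xs]) (use xs in auto)
  have n: "n = length as" using that as_def by simp
  have asA: "as ! i \<in> carrier A" if "i < n" for i using that as n nth_mem by blast
  have rep: "\<exists>\<phi>s. length \<phi>s = n \<and> set \<phi>s \<subseteq> End_H H A act \<and>
          a = finprod A (\<lambda>i. (\<phi>s ! i) (as ! i)) {..<n}" if a: "a \<in> carrier A" for a
  proof -
    obtain k where k: "k < n" "as ! k = a" using a as n by (metis in_set_conv_nth)
    define \<phi>s where "\<phi>s = map (\<lambda>i. if i = k then idA else zeroA) [0..<n]"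
    have l: "length \<phi>s = n" unfolding \<phi>s_def by simp
    have st: "set \<phi>s \<subseteq> End_H H A act" unfolding \<phi>s_def using idA_End zeroA_End by auto
    have "finprod A (\<lambda>i. (\<phi>s ! i) (as ! i)) {..<n} = finprod A (\<lambda>i. if k = i then as ! i else \<one>\<^bsub>A\<^esub>) {..<n}"
      by (intro A.finprod_cong') (auto simp: \<phi>s_def idA_def zeroA_def asA)
    also have "\<dots> = as ! k" by (rule A.finprod_singleton) (use k asA in auto)
    finally have "a = finprod A (\<lambda>i. (\<phi>s ! i) (as ! i)) {..<n}" using k by simp
    then show ?thesis using l st by blast
  qed
  show ?thesis
    by (rule exI[of _ as]) (use n as rep in simp)
qed

lemma dim_wit: "\<exists>as. length as = dim_End H A act \<and> set as \<subseteq> carrier A \<and>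
      (\<forall>a\<in>carrier A. \<exists>\<phi>s. length \<phi>s = dim_End H A act \<and> set \<phi>s \<subseteq> End_H H A act \<and>
          a = finprod A (\<lambda>i. (\<phi>s ! i) (as ! i)) {..<dim_End H A act})"
  unfolding dim_End_def by (rule LeastI_ex) (use dim_exists in blast)

lemma End_closed: "\<phi> \<in> End_H H A act \<Longrightarrow> x \<in> carrier A \<Longrightarrow> \<phi> x \<in> carrier A"
  unfolding End_H_def using PiE_mem by fastforce

lemma End_comm: "\<phi> \<in> End_H H A act \<Longrightarrow> x \<in> carrier A \<Longrightarrow> h \<in> carrier H \<Longrightarrow> act (\<phi> x) h = \<phi> (act x h)"
  unfolding End_H_def by simp

lemma sigma_le_dim: "sigma H A act \<le> dim_End H A act"
proof -
  obtain as where as12: "length as = dim_End H A act" "set as \<subseteq> carrier A"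
    and as3: "\<forall>a\<in>carrier A. \<exists>\<phi>s. length \<phi>s = dim_End H A act \<and> set \<phi>s \<subseteq> End_H H A act \<and>
          a = finprod A (\<lambda>i. (\<phi>s ! i) (as ! i)) {..<dim_End H A act}"
    using dim_wit by (elim exE conjE) 
  have as: "length as = dim_End H A act" "set as \<subseteq> carrier A"
    "\<And>a. a\<in>carrier A \<Longrightarrow> \<exists>\<phi>s. length \<phi>s = dim_End H A act \<and> set \<phi>s \<subseteq> End_H H A act \<and>
          a = finprod A (\<lambda>i. (\<phi>s ! i) (as ! i)) {..<dim_End H A act}"
    using as12 as3 by simp_all
  let ?n = "dim_End H A act"
  let ?F = "(\<lambda>a. der_kernel H A (innerd a)) ` set as"
  have "carrier H \<inter> \<Inter>?F = {\<one>\<^bsub>H\<^esub>}"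
  proof
    show "carrier H \<inter> \<Inter>?F \<subseteq> {\<one>\<^bsub>H\<^esub>}"
    proof
      fix h assume h: "h \<in> carrier H \<inter> \<Inter>?F"
      have fixb: "act b h = b" if "b \<in> set as" for b
      proof -
        have "h \<in> der_kernel H A (innerd b)" using h that by blast
        moreover have b: "b \<in> carrier A" using that as(2) by blast
        moreover have "der_kernel H A (innerd b) = {h \<in> carrier H. act b h = b}" by (rule innerd_kernel[OF b])
        ultimately show ?thesis by simp
      qed
      have "act a h = a" if a: "a \<in> carrier A" for a
      proof -
        obtain \<phi>s where ph: "length \<phi>s = ?n" "set \<phi>s \<subseteq> End_H H A act"
          "a = finprod A (\<lambda>i. (\<phi>s ! i) (as ! i)) {..<?n}" using as(3)[OF a] by blast
        have E: "(\<phi>s ! i) \<in> End_H H A act" if "i < ?n" for i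
        proof -
          have "\<phi>s ! i \<in> set \<phi>s" using that ph(1) by simp
          then show ?thesis using ph(2) by (rule subsetD[rotated])
        qed
        have asi: "as ! i \<in> set as" if "i < ?n" for i using as(1) that by simp
        have asA: "as ! i \<in> carrier A" if "i < ?n" for i using asi[OF that] as(2) by blast
        have cl: "(\<lambda>i. (\<phi>s ! i) (as ! i)) \<in> {..<?n} \<rightarrow> carrier A"
        proof
          fix i assume "i \<in> {..<?n}" then have "i < ?n" by simp
          then show "(\<phi>s ! i) (as ! i) \<in> carrier A" using End_closed[OF E asA] by blast
        qed
        have fx: "act ((\<phi>s ! i) (as ! i)) h = (\<phi>s ! i) (as ! i)" if "i \<in> {..<?n}" for i
        proof -
          have i: "i < ?n" using that by simp
          have "act ((\<phi>s ! i) (as ! i)) h = (\<phi>s ! i) (act (as ! i) h)"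
            using End_comm[OF E[OF i] asA[OF i]] h by blast
          then show ?thesis using fixb[OF asi[OF i]] by simp
        qed
        have "act (finprod A (\<lambda>i. (\<phi>s ! i) (as ! i)) {..<?n}) h = finprod A (\<lambda>i. (\<phi>s ! i) (as ! i)) {..<?n}"
          by (rule fixed_finprod[OF _ cl]) (use h fx in simp_all)
        then show ?thesis using ph(3) by simp
      qed
      then have "h = \<one>\<^bsub>H\<^esub>" using h by (intro faithful_use) simp_all
      then show "h \<in> {\<one>\<^bsub>H\<^esub>}" by simp
    qed
    show "{\<one>\<^bsub>H\<^esub>} \<subseteq> carrier H \<inter> \<Inter>?F"
    proof
      fix x assume "x \<in> {\<one>\<^bsub>H\<^esub>}"
      then have x: "x = \<one>\<^bsub>H\<^esub>" by simp
      have "x \<in> der_kernel H A (innerd b)" if "b \<in> set as" for b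
      proof -
        have "b \<in> carrier A" using that as(2) by blast
        then show ?thesis using innerd_kernel x by simp
      qed
      then show "x \<in> carrier H \<inter> \<Inter>?F" using x by auto
    qed
  qed
  moreover have "?F \<subseteq> Lambda H A act"
  proof
    fix Z assume "Z \<in> ?F"
    then obtain b where b: "b \<in> set as" "Z = der_kernel H A (innerd b)" by (rule imageE)
    then have "innerd b \<in> derivations H A act" using as(2) innerd_der by (simp add: subset_iff)
    then show "Z \<in> Lambda H A act" unfolding Lambda_def using b(2) by simp
  qed
  ultimately have "sigma H A act \<le> card ?F" by (intro sigma_le) simp_all
  also have "card ?F \<le> card (set as)" by (rule card_image_le) simp
  also have "\<dots> \<le> length as" by (rule card_length)
  finally show ?thesis using as(1) by simp
qed


section \<open>upper bound\<close>

definition zd where "zd = innerd \<one>\<^bsub>A\<^esub>"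

lemma zd_der: "zd \<in> derivations H A act"
  unfolding zd_def by (rule innerd_der) simp

lemma zd_val: "h \<in> carrier H \<Longrightarrow> zd h = \<one>\<^bsub>A\<^esub>"
  unfolding zd_def innerd_def by simp

lemma one_in_sub: "subgroup M G \<Longrightarrow> \<one>\<^bsub>G\<^esub> \<in> M"
  by (rule subgroup.one_closed)

lemma upper: "\<exists>F. F \<subseteq> {M. maximal_subgroup M G} \<and> finite F \<and> card F \<le> t + sigma H A act
   \<and> carrier G \<inter> \<Inter>F = {\<one>\<^bsub>G\<^esub>}"
proof -
  obtain Fs where Fs: "Fs \<subseteq> Lambda H A act" "finite Fs" "card Fs = sigma H A act"
    "carrier H \<inter> \<Inter>Fs = {\<one>\<^bsub>H\<^esub>}" using sigma_wit by (elim exE conjE) blast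
  define dL where "dL L = (SOME \<delta>. \<delta> \<in> derivations H A act \<and> der_kernel H A \<delta> = L)" for L
  define Phi where "Phi L = (if maximal_subgroup L H then Pk L else Md 0 (dL L))" for L
  have dL: "dL L \<in> derivations H A act \<and> der_kernel H A (dL L) = L"
    if "L \<in> Fs" "\<not> maximal_subgroup L H" for L
  proof -
    have "L \<in> der_kernel H A ` derivations H A act" using that Fs(1) unfolding Lambda_def by blast
    then obtain \<delta> where "\<delta> \<in> derivations H A act" "der_kernel H A \<delta> = L" by (rule imageE) simp
    then show ?thesis unfolding dL_def by (rule_tac someI[of _ \<delta>]) simp
  qed
  define F where "F = (\<lambda>j. Md j zd) ` {..<t} \<union> Phi ` Fs"
  have Fmax: "F \<subseteq> {M. maximal_subgroup M G}"
  proof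
    fix M assume "M \<in> F"
    then consider (a) j where "j < t" "M = Md j zd" | (b) L where "L \<in> Fs" "M = Phi L"
      unfolding F_def by blast
    then show "M \<in> {M. maximal_subgroup M G}"
    proof cases
      case a then show ?thesis using Md_maximal[OF zd_der] by simp
    next
      case b
      show ?thesis
      proof (cases "maximal_subgroup L H")
        case True then show ?thesis using b Pk_maximal by (simp add: Phi_def)
      next
        case False then show ?thesis using b dL[OF b(1) False] Md_maximal tpos by (simp add: Phi_def)
      qed
    qed
  qed
  have Ffin: "finite F" unfolding F_def using Fs(2) by simp
  have "card F \<le> card ((\<lambda>j. Md j zd) ` {..<t}) + card (Phi ` Fs)" unfolding F_def by (rule card_Un_le)
  also have "\<dots> \<le> t + sigma H A act"
    using card_image_le[of "{..<t}" "\<lambda>j. Md j zd"] card_image_le[OF Fs(2), of Phi] Fs(3) by simp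
  finally have Fcard: "card F \<le> t + sigma H A act" .
  have "carrier G \<inter> \<Inter>F \<subseteq> {\<one>\<^bsub>G\<^esub>}"
  proof
    fix x assume x: "x \<in> carrier G \<inter> \<Inter>F"
    obtain h v where xe: "x = (h, v)" by (cases x)
    have h: "h \<in> carrier H" and v: "v \<in> W" using x xe by simp_all
    have vj: "v j = \<one>\<^bsub>A\<^esub>" if "j < t" for j
    proof -
      have "Md j zd \<in> F" unfolding F_def using that by simp
      then have "(h, v) \<in> Md j zd" using x xe by blast
      then show ?thesis using zd_val[OF h] by (simp add: Md_mem)
    qed
    have v1: "v = (\<lambda>i\<in>{..<t}. \<one>\<^bsub>A\<^esub>)" by (rule W_eqI[OF v W_ne]) (simp add: vj)
    have "h \<in> L" if L: "L \<in> Fs" for L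
    proof -
      have "Phi L \<in> F" unfolding F_def using L by simp
      then have hP: "(h, v) \<in> Phi L" using x xe by blast
      show ?thesis
      proof (cases "maximal_subgroup L H")
        case True then show ?thesis using hP by (simp add: Phi_def Pk_def)
      next
        case False
        then have "v 0 = dL L h" using hP by (simp add: Phi_def Md_mem)
        then have "dL L h = \<one>\<^bsub>A\<^esub>" using vj tpos by simp
        then have "h \<in> der_kernel H A (dL L)" unfolding der_kernel_def using h by simp
        then show ?thesis using dL[OF L False] by simp
      qed
    qed
    then have "h \<in> carrier H \<inter> \<Inter>Fs" using h by blast
    then have "h = \<one>\<^bsub>H\<^esub>" using Fs(4) by blast
    then show "x \<in> {\<one>\<^bsub>G\<^esub>}" using xe v1 by (simp add: one_G)
  qed
  moreover have "{\<one>\<^bsub>G\<^esub>} \<subseteq> carrier G \<inter> \<Inter>F"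
  proof -
    have "\<one>\<^bsub>G\<^esub> \<in> M" if "M \<in> F" for M
      using Fmax that one_in_sub unfolding maximal_subgroup_def by blast
    then show ?thesis by blast
  qed
  ultimately have "carrier G \<inter> \<Inter>F = {\<one>\<^bsub>G\<^esub>}" by (rule subset_antisym)
  then show ?thesis using Fmax Ffin Fcard by blast
qed

lemma frattini_one: "frattini G = {\<one>\<^bsub>G\<^esub>}"
proof -
  obtain F where F: "F \<subseteq> {M. maximal_subgroup M G}" "carrier G \<inter> \<Inter>F = {\<one>\<^bsub>G\<^esub>}"
    using upper by blast
  have "frattini G \<subseteq> carrier G \<inter> \<Inter>F" unfolding frattini_def using F(1) by blast
  moreover have "\<one>\<^bsub>G\<^esub> \<in> frattini G"
    unfolding frattini_def using one_in_sub unfolding maximal_subgroup_def by blast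
  ultimately show ?thesis using F(2) by blast
qed

lemma alpha_upper: "alpha G \<le> t + sigma H A act"
proof -
  obtain F where F: "F \<subseteq> {M. maximal_subgroup M G}" "finite F" "card F \<le> t + sigma H A act"
    "carrier G \<inter> \<Inter>F = {\<one>\<^bsub>G\<^esub>}" using upper by blast
  have "alpha G \<le> card F" unfolding alpha_def
    by (rule Least_le) (use F frattini_one in blast)
  then show ?thesis using F(3) by simp
qed


abbreviation "Wg \<equiv> product_group {..<t} (\<lambda>_. A)"

lemma Wg_group: "group Wg" by (simp add: A.is_group)

lemma Wg_carrier[simp]: "carrier Wg = W" by simp

lemma Wg_mult: "v \<otimes>\<^bsub>Wg\<^esub> w = (\<lambda>i\<in>{..<t}. v i \<otimes>\<^bsub>A\<^esub> w i)" by simp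

lemma Wg_one: "\<one>\<^bsub>Wg\<^esub> = (\<lambda>i\<in>{..<t}. \<one>\<^bsub>A\<^esub>)" by simp

lemma Wg_comm: "comm_group Wg"
proof (rule group.group_comm_groupI[OF Wg_group])
  fix x y assume "x \<in> carrier Wg" "y \<in> carrier Wg"
  then show "x \<otimes>\<^bsub>Wg\<^esub> y = y \<otimes>\<^bsub>Wg\<^esub> x"
    by (simp only: Wg_mult Wg_carrier) (intro restrict_ext, simp add: A.m_comm)
qed

sublocale WW: comm_group Wg by (rule Wg_comm)

lemma Wg_inv: "v \<in> W \<Longrightarrow> inv\<^bsub>Wg\<^esub> v = (\<lambda>i\<in>{..<t}. inv\<^bsub>A\<^esub> (v i))"
  by (simp add: A.is_group)

lemma W_inv_closed[simp]: "v \<in> W \<Longrightarrow> inv\<^bsub>Wg\<^esub> v \<in> W"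
  using WW.inv_closed[of v] by simp
lemma W_mult_closed[simp]: "v \<in> W \<Longrightarrow> w \<in> W \<Longrightarrow> v \<otimes>\<^bsub>Wg\<^esub> w \<in> W"
  using WW.m_closed[of v w] by simp
lemma W_one_closed[simp]: "\<one>\<^bsub>Wg\<^esub> \<in> W"
  using WW.one_closed by simp

declare mult_product_group[simp del] one_product_group[simp del] inv_product_group[simp del]

definition aW :: "(nat \<Rightarrow> 'a) \<Rightarrow> 'h \<Rightarrow> (nat \<Rightarrow> 'a)" where
  "aW v h = (\<lambda>i\<in>{..<t}. act (v i) h)"

lemma aW_W: "v \<in> W \<Longrightarrow> h \<in> carrier H \<Longrightarrow> aW v h \<in> W"
  unfolding aW_def by (intro restrict_in_W) simp

lemma aW_mult: "v \<in> W \<Longrightarrow> w \<in> W \<Longrightarrow> h \<in> carrier H \<Longrightarrow> aW (v \<otimes>\<^bsub>Wg\<^esub> w) h = aW v h \<otimes>\<^bsub>Wg\<^esub> aW w h"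
  unfolding aW_def Wg_mult by (intro restrict_ext) (simp add: act_mult)

lemma aW_one: "h \<in> carrier H \<Longrightarrow> aW \<one>\<^bsub>Wg\<^esub> h = \<one>\<^bsub>Wg\<^esub>"
  unfolding aW_def Wg_one by (intro restrict_ext) simp

lemma aW_inv: "v \<in> W \<Longrightarrow> h \<in> carrier H \<Longrightarrow> aW (inv\<^bsub>Wg\<^esub> v) h = inv\<^bsub>Wg\<^esub> (aW v h)"
  using aW_W[of v h] unfolding aW_def by (simp add: Wg_inv, intro restrict_ext) simp

lemma aW_1h: "v \<in> W \<Longrightarrow> aW v \<one>\<^bsub>H\<^esub> = v"
  unfolding aW_def by (intro W_eqI restrict_in_W) simp_all

lemma aW_comp: "v \<in> W \<Longrightarrow> h \<in> carrier H \<Longrightarrow> k \<in> carrier H \<Longrightarrow> aW (aW v h) k = aW v (h \<otimes>\<^bsub>H\<^esub> k)"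
  unfolding aW_def by (intro restrict_ext) (simp add: act_comp)

lemma multG: "h \<in> carrier H \<Longrightarrow> k \<in> carrier H \<Longrightarrow> v \<in> W \<Longrightarrow> w \<in> W \<Longrightarrow>
   (h, v) \<otimes>\<^bsub>G\<^esub> (k, w) = (h \<otimes>\<^bsub>H\<^esub> k, aW v k \<otimes>\<^bsub>Wg\<^esub> w)"
  unfolding aW_def Wg_mult mult_G by (simp, intro restrict_ext) simp

lemma invG: "h \<in> carrier H \<Longrightarrow> v \<in> W \<Longrightarrow> inv\<^bsub>G\<^esub> (h, v) = (inv\<^bsub>H\<^esub> h, inv\<^bsub>Wg\<^esub> (aW v (inv\<^bsub>H\<^esub> h)))"
  using aW_W[of v "inv\<^bsub>H\<^esub> h"] unfolding inv_G by (simp add: Wg_inv, unfold aW_def, intro restrict_ext) simp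

lemma multV: "h \<in> carrier H \<Longrightarrow> v \<in> W \<Longrightarrow> x \<in> W \<Longrightarrow> (h, v) \<otimes>\<^bsub>G\<^esub> (\<one>\<^bsub>H\<^esub>, x) = (h, v \<otimes>\<^bsub>Wg\<^esub> x)"
  using mult_V by (simp only: Wg_mult)

lemma oneG: "\<one>\<^bsub>G\<^esub> = (\<one>\<^bsub>H\<^esub>, \<one>\<^bsub>Wg\<^esub>)" by (simp add: one_G one_product_group)


definition NM :: "('h \<times> (nat \<Rightarrow> 'a)) set \<Rightarrow> (nat \<Rightarrow> 'a) set" where
  "NM L = {v. (\<one>\<^bsub>H\<^esub>, v) \<in> L}"

lemma NM_W: "subgroup L G \<Longrightarrow> v \<in> NM L \<Longrightarrow> v \<in> W"
  unfolding NM_def using sub_pair by blast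

lemma NM_shift: "subgroup L G \<Longrightarrow> (h, v) \<in> L \<Longrightarrow> n \<in> NM L \<Longrightarrow> (h, v \<otimes>\<^bsub>Wg\<^esub> n) \<in> L"
  unfolding NM_def Wg_mult by (rule fiber_shift) simp_all

lemma NM_coset: "subgroup L G \<Longrightarrow> (h, v) \<in> L \<Longrightarrow> (h, w) \<in> L \<Longrightarrow> inv\<^bsub>Wg\<^esub> v \<otimes>\<^bsub>Wg\<^esub> w \<in> NM L"
proof -
  assume L: "subgroup L G" and a: "(h, v) \<in> L" and b: "(h, w) \<in> L"
  have hv: "h \<in> carrier H" "v \<in> W" "w \<in> W" using sub_pair[OF L a] sub_pair[OF L b] by auto
  have "inv\<^bsub>G\<^esub> (h, v) \<otimes>\<^bsub>G\<^esub> (h, w) \<in> L"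
    by (rule subgroup.m_closed[OF L subgroup.m_inv_closed[OF L a] b])
  moreover have "inv\<^bsub>G\<^esub> (h, v) \<otimes>\<^bsub>G\<^esub> (h, w) = (\<one>\<^bsub>H\<^esub>, inv\<^bsub>Wg\<^esub> v \<otimes>\<^bsub>Wg\<^esub> w)"
    unfolding inv_mult_same[OF hv] Wg_mult Wg_inv[OF hv(2)] by (simp, intro restrict_ext) simp
  ultimately show ?thesis unfolding NM_def by simp
qed

lemma NM_subgroup: "subgroup L G \<Longrightarrow> subgroup (NM L) Wg"
proof (rule WW.subgroupI)
  assume L: "subgroup L G"
  show "NM L \<subseteq> carrier Wg" using NM_W[OF L] by auto
  have "\<one>\<^bsub>G\<^esub> \<in> L" by (rule subgroup.one_closed[OF L])
  then have "\<one>\<^bsub>Wg\<^esub> \<in> NM L" unfolding NM_def oneG by simp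
  then show "NM L \<noteq> {}" by blast
  fix v assume v: "v \<in> NM L"
  then have vW: "v \<in> W" and vL: "(\<one>\<^bsub>H\<^esub>, v) \<in> L" using NM_W[OF L] unfolding NM_def by auto
  have "(\<one>\<^bsub>H\<^esub>, v) \<in> L" "(\<one>\<^bsub>H\<^esub>, \<one>\<^bsub>Wg\<^esub>) \<in> L" using vL \<open>\<one>\<^bsub>G\<^esub> \<in> L\<close> oneG by auto
  from NM_coset[OF L this] have "inv\<^bsub>Wg\<^esub> v \<otimes>\<^bsub>Wg\<^esub> \<one>\<^bsub>Wg\<^esub> \<in> NM L" .
  moreover have "inv\<^bsub>Wg\<^esub> v \<otimes>\<^bsub>Wg\<^esub> \<one>\<^bsub>Wg\<^esub> = inv\<^bsub>Wg\<^esub> v"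
    by (rule WW.r_one) (use vW in simp)
  ultimately show "inv\<^bsub>Wg\<^esub> v \<in> NM L" by simp
next
  fix v w assume L: "subgroup L G" and v: "v \<in> NM L" and w: "w \<in> NM L"
  then have "(\<one>\<^bsub>H\<^esub>, v) \<in> L" unfolding NM_def by simp
  from NM_shift[OF L this w] show "v \<otimes>\<^bsub>Wg\<^esub> w \<in> NM L" unfolding NM_def by simp
qed

lemma NM_invariant: "subgroup L G \<Longrightarrow> (h, u) \<in> L \<Longrightarrow> v \<in> NM L \<Longrightarrow> aW v h \<in> NM L"
proof -
  assume L: "subgroup L G" and hu: "(h, u) \<in> L" and v: "v \<in> NM L"
  have hv: "h \<in> carrier H" "u \<in> W" using sub_pair[OF L hu] by auto
  have vL: "(\<one>\<^bsub>H\<^esub>, v) \<in> L" "v \<in> W" using v NM_W[OF L v] unfolding NM_def by auto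
  have "inv\<^bsub>G\<^esub> (h, u) \<otimes>\<^bsub>G\<^esub> (\<one>\<^bsub>H\<^esub>, v) \<otimes>\<^bsub>G\<^esub> (h, u) \<in> L"
    by (rule subgroup.m_closed[OF L subgroup.m_closed[OF L subgroup.m_inv_closed[OF L hu] vL(1)] hu])
  then have "(\<one>\<^bsub>H\<^esub>, \<lambda>i\<in>{..<t}. act (v i) h) \<in> L" unfolding conj_V[OF hv vL(2)] .
  then show ?thesis unfolding NM_def aW_def by simp
qed

lemma fiber_unique: "subgroup L G \<Longrightarrow> NM L = {\<one>\<^bsub>Wg\<^esub>} \<Longrightarrow> (h, v) \<in> L \<Longrightarrow> (h, w) \<in> L \<Longrightarrow> v = w"
proof -
  assume L: "subgroup L G" and N: "NM L = {\<one>\<^bsub>Wg\<^esub>}" and a: "(h, v) \<in> L" and b: "(h, w) \<in> L"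
  have "v \<in> W" "w \<in> W" using sub_pair[OF L a] sub_pair[OF L b] by auto
  moreover have "inv\<^bsub>Wg\<^esub> v \<otimes>\<^bsub>Wg\<^esub> w = \<one>\<^bsub>Wg\<^esub>" using NM_coset[OF L a b] N by blast
  ultimately have "v \<otimes>\<^bsub>Wg\<^esub> (inv\<^bsub>Wg\<^esub> v \<otimes>\<^bsub>Wg\<^esub> w) = v"
    by (simp only: Wg_carrier WW.r_one)
  moreover have "v \<otimes>\<^bsub>Wg\<^esub> (inv\<^bsub>Wg\<^esub> v \<otimes>\<^bsub>Wg\<^esub> w) = w"
    using \<open>v \<in> W\<close> \<open>w \<in> W\<close> by (simp add: WW.m_assoc[symmetric] WW.r_inv)
  ultimately show "v = w" by simp
qed

section \<open>Classification of maximal subgroups\<close>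

lemma Pk_inj: "Pk K = Pk K' \<Longrightarrow> K = K'"
proof -
  assume e: "Pk K = Pk K'"
  have "k \<in> K \<longleftrightarrow> k \<in> K'" for k
  proof -
    have "(k, \<one>\<^bsub>Wg\<^esub>) \<in> Pk K \<longleftrightarrow> (k, \<one>\<^bsub>Wg\<^esub>) \<in> Pk K'" using e by simp
    then show ?thesis unfolding Pk_def by simp
  qed
  then show ?thesis by blast
qed

lemma max_F1: "maximal_subgroup M G \<Longrightarrow> Vs \<subseteq> M \<Longrightarrow> M = Pk (fst ` M) \<and> maximal_subgroup (fst ` M) H"
proof -
  assume M: "maximal_subgroup M G" and V: "Vs \<subseteq> M"
  have Ms: "subgroup M G" and Mne: "M \<noteq> carrier G"
    and Mm: "\<And>K. subgroup K G \<Longrightarrow> M \<subseteq> K \<Longrightarrow> K = M \<or> K = carrier G"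
    using M unfolding maximal_subgroup_def by auto
  have Me: "M = Pk (fst ` M)" by (rule Vs_sub_eq[OF Ms V])
  have "maximal_subgroup (fst ` M) H" unfolding maximal_subgroup_def
  proof (intro conjI allI impI)
    show "subgroup (fst ` M) H" by (rule fst_subgroup[OF Ms])
    show "fst ` M \<noteq> carrier H"
    proof
      assume "fst ` M = carrier H"
      then have "M = carrier G" using Me by (simp add: Pk_def carrier_G)
      then show False using Mne by simp
    qed
    fix K assume K: "subgroup K H \<and> fst ` M \<subseteq> K"
    then have "subgroup (Pk K) G" using Pk_subgroup by simp
    moreover have "M \<subseteq> Pk K" using K Me unfolding Pk_def by (metis Sigma_mono order_refl)
    ultimately have "Pk K = M \<or> Pk K = carrier G" using Mm by simp
    then show "K = fst ` M \<or> K = carrier H"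
    proof
      assume "Pk K = M" then show ?thesis using Me Pk_inj by metis
    next
      assume "Pk K = carrier G" then have "Pk K = Pk (carrier H)" by (simp add: Pk_def carrier_G)
      then show ?thesis using Pk_inj by metis
    qed
  qed
  then show ?thesis using Me by simp
qed

lemma max_F2_full: "maximal_subgroup M G \<Longrightarrow> \<not> Vs \<subseteq> M \<Longrightarrow> fst ` M = carrier H"
proof -
  assume M: "maximal_subgroup M G" and V: "\<not> Vs \<subseteq> M"
  have Ms: "subgroup M G" and Mm: "\<And>K. subgroup K G \<Longrightarrow> M \<subseteq> K \<Longrightarrow> K = M \<or> K = carrier G"
    using M unfolding maximal_subgroup_def by auto
  have sP: "subgroup (Pk (fst ` M)) G" by (rule Pk_subgroup[OF fst_subgroup[OF Ms]])
  have MP: "M \<subseteq> Pk (fst ` M)"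
  proof
    fix x assume x: "x \<in> M"
    obtain h v where xe: "x = (h, v)" by (cases x)
    have "v \<in> W" using sub_pair[OF Ms] x xe by simp
    moreover have "h \<in> fst ` M" using x xe by force
    ultimately show "x \<in> Pk (fst ` M)" using xe by (simp add: Pk_def)
  qed
  have "\<one>\<^bsub>G\<^esub> \<in> M" by (rule subgroup.one_closed[OF Ms])
  then have "\<one>\<^bsub>H\<^esub> \<in> fst ` M" by (force simp: one_G)
  then have "Vs \<subseteq> Pk (fst ` M)" unfolding Vs_def Pk_def by (intro Sigma_mono) simp_all
  then have "Pk (fst ` M) \<noteq> M" using V by blast
  then have "Pk (fst ` M) = carrier G" using Mm[OF sP MP] by simp
  then have "Pk (fst ` M) = Pk (carrier H)" by (simp add: Pk_def carrier_G)
  then show ?thesis using Pk_inj by metis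
qed


section \<open>The linear functional phi\<close>

lemma ej_multW: "a \<in> carrier A \<Longrightarrow> b \<in> carrier A \<Longrightarrow> ej j (a \<otimes>\<^bsub>A\<^esub> b) = ej j a \<otimes>\<^bsub>Wg\<^esub> ej j b"
  unfolding Wg_mult ej_def by (intro restrict_ext) simp

lemma ej_oneW: "ej j \<one>\<^bsub>A\<^esub> = \<one>\<^bsub>Wg\<^esub>"
  unfolding ej_one Wg_one ..

lemma ej_invW: "a \<in> carrier A \<Longrightarrow> ej j (inv\<^bsub>A\<^esub> a) = inv\<^bsub>Wg\<^esub> (ej j a)"
proof -
  assume a: "a \<in> carrier A"
  have "inv\<^bsub>Wg\<^esub> (ej j a) = (\<lambda>i\<in>{..<t}. inv\<^bsub>A\<^esub> (ej j a i))" by (rule Wg_inv[OF ej_W[OF a]])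
  then show ?thesis unfolding ej_def using a by (simp, intro restrict_ext) simp
qed

lemma aW_ej: "a \<in> carrier A \<Longrightarrow> h \<in> carrier H \<Longrightarrow> aW (ej j a) h = ej j (act a h)"
  unfolding aW_def ej_def by (intro restrict_ext) simp

lemma ej_inj: "j < t \<Longrightarrow> ej j a = ej j b \<Longrightarrow> a = b"
proof -
  assume j: "j < t" and e: "ej j a = ej j b"
  have "ej j a j = ej j b j" using e by simp
  then show "a = b" using j by (simp add: ej_app)
qed

lemma gen_W: "subgroup N Wg \<Longrightarrow> (\<And>j a. j < t \<Longrightarrow> a \<in> carrier A \<Longrightarrow> ej j a \<in> N) \<Longrightarrow> W \<subseteq> N"
proof
  fix w assume N: "subgroup N Wg" and e: "\<And>j a. j < t \<Longrightarrow> a \<in> carrier A \<Longrightarrow> ej j a \<in> N" and w: "w \<in> W"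
  define pk where "pk k = (\<lambda>i\<in>{..<t}. if i < k then w i else \<one>\<^bsub>A\<^esub>)" for k
  have pkW: "pk k \<in> W" for k unfolding pk_def using w by (intro restrict_in_W) simp
  have "pk k \<in> N" for k
  proof (induction k)
    case 0
    have "pk 0 = \<one>\<^bsub>Wg\<^esub>" unfolding pk_def Wg_one by (intro restrict_ext) simp
    then show ?case using subgroup.one_closed[OF N] by simp
  next
    case (Suc k)
    show ?case
    proof (cases "k < t")
      case True
      have "pk (Suc k) = pk k \<otimes>\<^bsub>Wg\<^esub> ej k (w k)"
        unfolding Wg_mult using w True by (intro W_eqI restrict_in_W) (simp_all add: pk_def ej_app pkW)
      moreover have "ej k (w k) \<in> N" using e True w by simp
      ultimately show ?thesis using subgroup.m_closed[OF N Suc.IH] by simp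
    next
      case False
      then have "pk (Suc k) = pk k" unfolding pk_def by (intro restrict_ext) simp
      then show ?thesis using Suc.IH by simp
    qed
  qed
  moreover have "pk t = w" using w by (intro W_eqI pkW) (simp_all add: pk_def)
  ultimately show "w \<in> N" by metis
qed

lemma ej_dich:
  assumes L: "subgroup L G" and full: "\<And>h. h \<in> carrier H \<Longrightarrow> \<exists>u. (h, u) \<in> L" and j: "j < t"
  shows "{b \<in> carrier A. ej j b \<in> NM L} = {\<one>\<^bsub>A\<^esub>} \<or> {b \<in> carrier A. ej j b \<in> NM L} = carrier A"
proof (rule irr_use)
  have N: "subgroup (NM L) Wg" by (rule NM_subgroup[OF L])
  show "subgroup {b \<in> carrier A. ej j b \<in> NM L} A"
  proof (rule A.subgroupI)
    show "{b \<in> carrier A. ej j b \<in> NM L} \<subseteq> carrier A" by blast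
    have "ej j \<one>\<^bsub>A\<^esub> \<in> NM L" unfolding ej_oneW by (rule subgroup.one_closed[OF N])
    then show "{b \<in> carrier A. ej j b \<in> NM L} \<noteq> {}" by blast
    fix b assume "b \<in> {b \<in> carrier A. ej j b \<in> NM L}"
    then show "inv\<^bsub>A\<^esub> b \<in> {b \<in> carrier A. ej j b \<in> NM L}"
      using subgroup.m_inv_closed[OF N] by (simp add: ej_invW)
  next
    fix b c assume "b \<in> {b \<in> carrier A. ej j b \<in> NM L}" "c \<in> {b \<in> carrier A. ej j b \<in> NM L}"
    then show "b \<otimes>\<^bsub>A\<^esub> c \<in> {b \<in> carrier A. ej j b \<in> NM L}"
      using subgroup.m_closed[OF N] by (simp add: ej_multW)
  qed
  fix b h assume b: "b \<in> {b \<in> carrier A. ej j b \<in> NM L}" and h: "h \<in> carrier H"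
  obtain u where u: "(h, u) \<in> L" using full[OF h] by blast
  have "aW (ej j b) h \<in> NM L" using b by (intro NM_invariant[OF L u]) simp
  then show "act b h \<in> {b \<in> carrier A. ej j b \<in> NM L}" using b h by (simp add: aW_ej)
qed


lemma Lp_subgroup:
  assumes M: "subgroup M G" and j: "j < t"
  shows "subgroup {(h, w \<otimes>\<^bsub>Wg\<^esub> ej j b) | h w b. (h, w) \<in> M \<and> b \<in> carrier A} G"
    (is "subgroup ?L G")
proof (rule GG.subgroupI)
  show "?L \<subseteq> carrier G"
  proof
    fix x assume "x \<in> ?L"
    then obtain h w b where x: "x = (h, w \<otimes>\<^bsub>Wg\<^esub> ej j b)" "(h, w) \<in> M" "b \<in> carrier A" by blast
    then have "h \<in> carrier H" "w \<in> W" using sub_pair[OF M] by auto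
    then show "x \<in> carrier G" using x ej_W by simp
  qed
  have "\<one>\<^bsub>G\<^esub> \<in> M" by (rule subgroup.one_closed[OF M])
  then have "(\<one>\<^bsub>H\<^esub>, \<one>\<^bsub>Wg\<^esub>) \<in> M" by (simp add: oneG)
  then have "(\<one>\<^bsub>H\<^esub>, \<one>\<^bsub>Wg\<^esub> \<otimes>\<^bsub>Wg\<^esub> ej j \<one>\<^bsub>A\<^esub>) \<in> ?L" by blast
  then show "?L \<noteq> {}" by blast
next
  fix x assume "x \<in> ?L"
  then obtain h w b where x: "x = (h, w \<otimes>\<^bsub>Wg\<^esub> ej j b)" and hw: "(h, w) \<in> M" and b: "b \<in> carrier A" by blast
  have h: "h \<in> carrier H" and w: "w \<in> W" using sub_pair[OF M hw] by auto
  let ?h' = "inv\<^bsub>H\<^esub> h"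
  have h': "?h' \<in> carrier H" using h by simp
  have "inv\<^bsub>G\<^esub> (h, w) \<in> M" by (rule subgroup.m_inv_closed[OF M hw])
  then have inM: "(?h', inv\<^bsub>Wg\<^esub> (aW w ?h')) \<in> M" using invG[OF h w] by simp
  have "inv\<^bsub>G\<^esub> x = (?h', inv\<^bsub>Wg\<^esub> (aW (w \<otimes>\<^bsub>Wg\<^esub> ej j b) ?h'))"
    unfolding x by (rule invG[OF h]) (use w b ej_W in simp)
  also have "inv\<^bsub>Wg\<^esub> (aW (w \<otimes>\<^bsub>Wg\<^esub> ej j b) ?h') = inv\<^bsub>Wg\<^esub> (aW w ?h') \<otimes>\<^bsub>Wg\<^esub> ej j (inv\<^bsub>A\<^esub> (act b ?h'))"
    using w b h' ej_W[OF b] aW_W[OF w h'] by (simp add: aW_mult aW_ej WW.inv_mult ej_invW ej_W)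
  finally have "inv\<^bsub>G\<^esub> x = (?h', inv\<^bsub>Wg\<^esub> (aW w ?h') \<otimes>\<^bsub>Wg\<^esub> ej j (inv\<^bsub>A\<^esub> (act b ?h')))" .
  moreover have "inv\<^bsub>A\<^esub> (act b ?h') \<in> carrier A" using b h' by simp
  ultimately show "inv\<^bsub>G\<^esub> x \<in> ?L" using inM by blast
next
  fix x y assume "x \<in> ?L" "y \<in> ?L"
  then obtain h w b k w' b' where x: "x = (h, w \<otimes>\<^bsub>Wg\<^esub> ej j b)" and hw: "(h, w) \<in> M" and b: "b \<in> carrier A"
    and y: "y = (k, w' \<otimes>\<^bsub>Wg\<^esub> ej j b')" and kw: "(k, w') \<in> M" and b': "b' \<in> carrier A" by blast
  have h: "h \<in> carrier H" and w: "w \<in> W" using sub_pair[OF M hw] by auto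
  have k: "k \<in> carrier H" and w': "w' \<in> W" using sub_pair[OF M kw] by auto
  have "(h, w) \<otimes>\<^bsub>G\<^esub> (k, w') \<in> M" by (rule subgroup.m_closed[OF M hw kw])
  then have inM: "(h \<otimes>\<^bsub>H\<^esub> k, aW w k \<otimes>\<^bsub>Wg\<^esub> w') \<in> M" using multG[OF h k w w'] by simp
  have "x \<otimes>\<^bsub>G\<^esub> y = (h \<otimes>\<^bsub>H\<^esub> k, aW (w \<otimes>\<^bsub>Wg\<^esub> ej j b) k \<otimes>\<^bsub>Wg\<^esub> (w' \<otimes>\<^bsub>Wg\<^esub> ej j b'))"
    unfolding x y by (rule multG[OF h k]) (use w w' b b' ej_W in simp_all)
  also have "aW (w \<otimes>\<^bsub>Wg\<^esub> ej j b) k \<otimes>\<^bsub>Wg\<^esub> (w' \<otimes>\<^bsub>Wg\<^esub> ej j b') =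
     (aW w k \<otimes>\<^bsub>Wg\<^esub> w') \<otimes>\<^bsub>Wg\<^esub> ej j (act b k \<otimes>\<^bsub>A\<^esub> b')"
    using w w' b b' k ej_W[OF b] ej_W[OF b'] aW_W[OF w k] ej_W[of "act b k"]
    by (simp add: aW_mult aW_ej ej_multW WW.m_ac)
  finally have "x \<otimes>\<^bsub>G\<^esub> y = (h \<otimes>\<^bsub>H\<^esub> k, (aW w k \<otimes>\<^bsub>Wg\<^esub> w') \<otimes>\<^bsub>Wg\<^esub> ej j (act b k \<otimes>\<^bsub>A\<^esub> b'))" .
  moreover have "act b k \<otimes>\<^bsub>A\<^esub> b' \<in> carrier A" using b b' k by simp
  ultimately show "x \<otimes>\<^bsub>G\<^esub> y \<in> ?L" using inM by blast
qed


lemma phi_exists: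
  assumes Mmax: "maximal_subgroup M G" and V: "\<not> Vs \<subseteq> M"
  shows "\<exists>\<phi>. (\<forall>v\<in>W. \<phi> v \<in> carrier A) \<and> (\<forall>v\<in>W. \<forall>w\<in>W. \<phi> (v \<otimes>\<^bsub>Wg\<^esub> w) = \<phi> v \<otimes>\<^bsub>A\<^esub> \<phi> w)
     \<and> (\<forall>v\<in>W. \<phi> v = \<one>\<^bsub>A\<^esub> \<longleftrightarrow> v \<in> NM M) \<and> (\<forall>v\<in>W. \<forall>h\<in>carrier H. \<phi> (aW v h) = act (\<phi> v) h)
     \<and> (\<forall>a\<in>carrier A. \<exists>v\<in>W. \<phi> v = a)"
proof -
  have M: "subgroup M G" and Mm: "\<And>K. subgroup K G \<Longrightarrow> M \<subseteq> K \<Longrightarrow> K = M \<or> K = carrier G"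
    using Mmax unfolding maximal_subgroup_def by auto
  have fullM: "fst ` M = carrier H" by (rule max_F2_full[OF Mmax V])
  have full: "\<exists>u. (h, u) \<in> M" if "h \<in> carrier H" for h
  proof -
    have "h \<in> fst ` M" using that fullM by simp
    then obtain x where "x \<in> M" "h = fst x" by (rule imageE)
    then show ?thesis by (cases x) auto
  qed
  let ?N = "NM M"
  have N: "subgroup ?N Wg" by (rule NM_subgroup[OF M])
  have NW: "\<And>v. v \<in> ?N \<Longrightarrow> v \<in> W" using NM_W[OF M] by blast
  have "\<not> W \<subseteq> ?N"
  proof
    assume "W \<subseteq> ?N"
    then have "Vs \<subseteq> M" unfolding Vs_def NM_def by blast
    then show False using V by simp
  qed
  then obtain j a where j: "j < t" and a: "a \<in> carrier A" and aN: "ej j a \<notin> ?N"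
    using gen_W[OF N] by blast
  define B where "B = {b \<in> carrier A. ej j b \<in> ?N}"
  have "B = {\<one>\<^bsub>A\<^esub>} \<or> B = carrier A" unfolding B_def by (rule ej_dich[OF M full j])
  moreover have "B \<noteq> carrier A" using a aN unfolding B_def by blast
  ultimately have B1: "B = {\<one>\<^bsub>A\<^esub>}" by simp
  have Bj: "b = \<one>\<^bsub>A\<^esub>" if "b \<in> carrier A" "ej j b \<in> ?N" for b using that B1 unfolding B_def by blast
  define L' where "L' = {(h, w \<otimes>\<^bsub>Wg\<^esub> ej j b) | h w b. (h, w) \<in> M \<and> b \<in> carrier A}"
  have L': "subgroup L' G" unfolding L'_def by (rule Lp_subgroup[OF M j])
  have MinL': "M \<subseteq> L'"
  proof
    fix x assume x: "x \<in> M"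
    obtain h w where xe: "x = (h, w)" by (cases x)
    have "w \<in> W" using sub_pair[OF M] x xe by simp
    then have "w = w \<otimes>\<^bsub>Wg\<^esub> ej j \<one>\<^bsub>A\<^esub>" by (simp add: ej_oneW)
    then show "x \<in> L'" unfolding L'_def using x xe by blast
  qed
  have "(\<one>\<^bsub>H\<^esub>, \<one>\<^bsub>Wg\<^esub>) \<in> M" using subgroup.one_closed[OF M] by (simp add: oneG)
  moreover have "ej j a = \<one>\<^bsub>Wg\<^esub> \<otimes>\<^bsub>Wg\<^esub> ej j a" using a ej_W[OF a] by simp
  ultimately have "(\<one>\<^bsub>H\<^esub>, ej j a) \<in> L'" unfolding L'_def using a by blast
  moreover have "(\<one>\<^bsub>H\<^esub>, ej j a) \<notin> M" using aN unfolding NM_def by simp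
  ultimately have "L' \<noteq> M" by blast
  then have L'G: "L' = carrier G" using Mm[OF L' MinL'] by simp
  have decomp: "\<exists>w\<in>?N. \<exists>b\<in>carrier A. v = w \<otimes>\<^bsub>Wg\<^esub> ej j b" if v: "v \<in> W" for v
  proof -
    have "(\<one>\<^bsub>H\<^esub>, v) \<in> L'" using L'G v by simp
    then obtain h w b where "(\<one>\<^bsub>H\<^esub>, v) = (h, w \<otimes>\<^bsub>Wg\<^esub> ej j b)" "(h, w) \<in> M" "b \<in> carrier A"
      unfolding L'_def by blast
    then show ?thesis unfolding NM_def by auto
  qed
  have uniq: "b = b'" if "w \<in> ?N" "w' \<in> ?N" "b \<in> carrier A" "b' \<in> carrier A"
    "w \<otimes>\<^bsub>Wg\<^esub> ej j b = w' \<otimes>\<^bsub>Wg\<^esub> ej j b'" for w w' b b'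
  proof -
    have wW: "w \<in> W" "w' \<in> W" using that NW by auto
    have eW: "ej j b \<in> W" "ej j b' \<in> W" using that ej_W by auto
    have "ej j (b \<otimes>\<^bsub>A\<^esub> inv\<^bsub>A\<^esub> b') = ej j b \<otimes>\<^bsub>Wg\<^esub> inv\<^bsub>Wg\<^esub> (ej j b')"
      using that by (simp add: ej_multW ej_invW)
    also have "\<dots> = inv\<^bsub>Wg\<^esub> w \<otimes>\<^bsub>Wg\<^esub> w'"
    proof -
      have "inv\<^bsub>Wg\<^esub> w \<otimes>\<^bsub>Wg\<^esub> (w \<otimes>\<^bsub>Wg\<^esub> ej j b) \<otimes>\<^bsub>Wg\<^esub> inv\<^bsub>Wg\<^esub> (ej j b')
          = inv\<^bsub>Wg\<^esub> w \<otimes>\<^bsub>Wg\<^esub> (w' \<otimes>\<^bsub>Wg\<^esub> ej j b') \<otimes>\<^bsub>Wg\<^esub> inv\<^bsub>Wg\<^esub> (ej j b')"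
        using that(5) by simp
      then show ?thesis using wW eW by (simp add: WW.m_assoc[symmetric] WW.l_inv WW.r_inv)
          (simp add: WW.m_assoc WW.r_inv)
    qed
    finally have "ej j (b \<otimes>\<^bsub>A\<^esub> inv\<^bsub>A\<^esub> b') \<in> ?N"
      using that subgroup.m_closed[OF N subgroup.m_inv_closed[OF N]] by simp
    then have "b \<otimes>\<^bsub>A\<^esub> inv\<^bsub>A\<^esub> b' = \<one>\<^bsub>A\<^esub>" using that by (intro Bj) simp_all
    then show "b = b'" using that by (metis A.inv_closed A.inv_equality A.inv_inv A.m_comm)
  qed
  define \<phi> where "\<phi> v = (THE b. b \<in> carrier A \<and> (\<exists>w\<in>?N. v = w \<otimes>\<^bsub>Wg\<^esub> ej j b))" for v
  have phi_eq: "\<phi> v = b" if "w \<in> ?N" "b \<in> carrier A" "v = w \<otimes>\<^bsub>Wg\<^esub> ej j b" for v w b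
    unfolding \<phi>_def
  proof (rule the_equality)
    show "b \<in> carrier A \<and> (\<exists>w\<in>?N. v = w \<otimes>\<^bsub>Wg\<^esub> ej j b)" using that by blast
    fix b' assume "b' \<in> carrier A \<and> (\<exists>w\<in>?N. v = w \<otimes>\<^bsub>Wg\<^esub> ej j b')"
    then obtain w' where "b' \<in> carrier A" "w' \<in> ?N" "v = w' \<otimes>\<^bsub>Wg\<^esub> ej j b'" by blast
    then show "b' = b" using uniq[of w' w b' b] that by simp
  qed
  have phi_spec: "\<phi> v \<in> carrier A \<and> (\<exists>w\<in>?N. v = w \<otimes>\<^bsub>Wg\<^esub> ej j (\<phi> v))" if v: "v \<in> W" for v
  proof -
    obtain w b where wb: "w \<in> ?N" "b \<in> carrier A" "v = w \<otimes>\<^bsub>Wg\<^esub> ej j b" using decomp[OF v] by blast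
    then have "\<phi> v = b" by (intro phi_eq)
    then show ?thesis using wb by blast
  qed
  show ?thesis
  proof (intro exI[of _ \<phi>] conjI ballI)
    fix v assume v: "v \<in> W"
    show "\<phi> v \<in> carrier A" using phi_spec[OF v] by blast
  next
    fix v w assume v: "v \<in> W" and w: "w \<in> W"
    obtain x where x: "x \<in> ?N" "v = x \<otimes>\<^bsub>Wg\<^esub> ej j (\<phi> v)" and pv: "\<phi> v \<in> carrier A" using phi_spec[OF v] by blast
    obtain y where y: "y \<in> ?N" "w = y \<otimes>\<^bsub>Wg\<^esub> ej j (\<phi> w)" and pw: "\<phi> w \<in> carrier A" using phi_spec[OF w] by blast
    have xy: "x \<in> W" "y \<in> W" using x y NW by auto
    have gen: "(x' \<otimes>\<^bsub>Wg\<^esub> ej j p) \<otimes>\<^bsub>Wg\<^esub> (y' \<otimes>\<^bsub>Wg\<^esub> ej j q) = (x' \<otimes>\<^bsub>Wg\<^esub> y') \<otimes>\<^bsub>Wg\<^esub> ej j (p \<otimes>\<^bsub>A\<^esub> q)"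
      if "x' \<in> W" "y' \<in> W" "p \<in> carrier A" "q \<in> carrier A" for x' y' p q
      using that ej_W[of p] ej_W[of q] by (simp add: ej_multW WW.m_ac)
    have "v \<otimes>\<^bsub>Wg\<^esub> w = (x \<otimes>\<^bsub>Wg\<^esub> ej j (\<phi> v)) \<otimes>\<^bsub>Wg\<^esub> (y \<otimes>\<^bsub>Wg\<^esub> ej j (\<phi> w))"
      using x(2) y(2) by (rule arg_cong2[where f="(\<otimes>\<^bsub>Wg\<^esub>)"])
    also have "\<dots> = (x \<otimes>\<^bsub>Wg\<^esub> y) \<otimes>\<^bsub>Wg\<^esub> ej j (\<phi> v \<otimes>\<^bsub>A\<^esub> \<phi> w)"
      by (rule gen[OF xy pv pw])
    finally have "v \<otimes>\<^bsub>Wg\<^esub> w = (x \<otimes>\<^bsub>Wg\<^esub> y) \<otimes>\<^bsub>Wg\<^esub> ej j (\<phi> v \<otimes>\<^bsub>A\<^esub> \<phi> w)" .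
    moreover have "x \<otimes>\<^bsub>Wg\<^esub> y \<in> ?N" using subgroup.m_closed[OF N x(1) y(1)] .
    ultimately show "\<phi> (v \<otimes>\<^bsub>Wg\<^esub> w) = \<phi> v \<otimes>\<^bsub>A\<^esub> \<phi> w" using pv pw by (intro phi_eq) simp_all
  next
    fix v assume v: "v \<in> W"
    show "\<phi> v = \<one>\<^bsub>A\<^esub> \<longleftrightarrow> v \<in> ?N"
    proof
      assume p: "\<phi> v = \<one>\<^bsub>A\<^esub>"
      obtain x where x: "x \<in> ?N" "v = x \<otimes>\<^bsub>Wg\<^esub> ej j (\<phi> v)" using phi_spec[OF v] by blast
      then have "v = x" using NW[OF x(1)] by (simp add: p ej_oneW)
      then show "v \<in> ?N" using x by simp
    next
      assume "v \<in> ?N"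
      moreover have "v = v \<otimes>\<^bsub>Wg\<^esub> ej j \<one>\<^bsub>A\<^esub>" using v by (simp add: ej_oneW)
      ultimately show "\<phi> v = \<one>\<^bsub>A\<^esub>" by (intro phi_eq) simp_all
    qed
  next
    fix v h assume v: "v \<in> W" and h: "h \<in> carrier H"
    obtain x where x: "x \<in> ?N" "v = x \<otimes>\<^bsub>Wg\<^esub> ej j (\<phi> v)" and pv: "\<phi> v \<in> carrier A" using phi_spec[OF v] by blast
    have xW: "x \<in> W" using NW[OF x(1)] .
    obtain u where u: "(h, u) \<in> M" using full[OF h] by blast
    have "aW x h \<in> ?N" by (rule NM_invariant[OF M u x(1)])
    moreover have "aW v h = aW x h \<otimes>\<^bsub>Wg\<^esub> ej j (act (\<phi> v) h)"
    proof -
      have "aW v h = aW (x \<otimes>\<^bsub>Wg\<^esub> ej j (\<phi> v)) h" using x(2) by (rule arg_cong)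
      also have "\<dots> = aW x h \<otimes>\<^bsub>Wg\<^esub> ej j (act (\<phi> v) h)"
        using xW pv h by (simp add: aW_mult aW_ej ej_W)
      finally show ?thesis .
    qed
    moreover have "act (\<phi> v) h \<in> carrier A" using pv h by simp
    ultimately show "\<phi> (aW v h) = act (\<phi> v) h" by (intro phi_eq)
  next
    fix b assume b: "b \<in> carrier A"
    have "\<one>\<^bsub>Wg\<^esub> \<in> ?N" by (rule subgroup.one_closed[OF N])
    moreover have "ej j b = \<one>\<^bsub>Wg\<^esub> \<otimes>\<^bsub>Wg\<^esub> ej j b" using ej_W[OF b] by simp
    ultimately have "\<phi> (ej j b) = b" using b by (intro phi_eq)
    then show "\<exists>v\<in>W. \<phi> v = b" using ej_W[OF b] by blast
  qed
qed


lemma Wc1: "b \<in> W \<Longrightarrow> a \<in> W \<Longrightarrow> inv\<^bsub>Wg\<^esub> a \<otimes>\<^bsub>Wg\<^esub> (a \<otimes>\<^bsub>Wg\<^esub> b) = b"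
  by (metis WW.m_assoc WW.inv_closed WW.l_inv WW.l_one Wg_carrier)
lemma Wc2: "b \<in> W \<Longrightarrow> a \<in> W \<Longrightarrow> a \<otimes>\<^bsub>Wg\<^esub> (inv\<^bsub>Wg\<^esub> a \<otimes>\<^bsub>Wg\<^esub> b) = b"
  by (metis WW.m_assoc WW.inv_closed WW.r_inv WW.l_one Wg_carrier)

definition isphi :: "((nat \<Rightarrow> 'a) \<Rightarrow> 'a) \<Rightarrow> (nat \<Rightarrow> 'a) set \<Rightarrow> bool" where
  "isphi \<phi> N \<longleftrightarrow> (\<forall>v\<in>W. \<phi> v \<in> carrier A) \<and> (\<forall>v\<in>W. \<forall>w\<in>W. \<phi> (v \<otimes>\<^bsub>Wg\<^esub> w) = \<phi> v \<otimes>\<^bsub>A\<^esub> \<phi> w)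
     \<and> (\<forall>v\<in>W. \<phi> v = \<one>\<^bsub>A\<^esub> \<longleftrightarrow> v \<in> N) \<and> (\<forall>v\<in>W. \<forall>h\<in>carrier H. \<phi> (aW v h) = act (\<phi> v) h)
     \<and> (\<forall>a\<in>carrier A. \<exists>v\<in>W. \<phi> v = a)"

lemma phi_ex2: "maximal_subgroup M G \<Longrightarrow> \<not> Vs \<subseteq> M \<Longrightarrow> \<exists>\<phi>. isphi \<phi> (NM M)"
  unfolding isphi_def by (rule phi_exists)

lemma finW: "finite W" using finA by (simp add: finite_PiE)

lemma cardW: "card W = card (carrier A) ^ t"
  by (simp add: card_PiE)

lemma cardA_gt1: "card (carrier A) > 1"
proof -
  obtain a where a: "a \<in> carrier A" "a \<noteq> \<one>\<^bsub>A\<^esub>" using A_nontriv by blast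
  have "{a, \<one>\<^bsub>A\<^esub>} \<subseteq> carrier A" using a by simp
  then have "card {a, \<one>\<^bsub>A\<^esub>} \<le> card (carrier A)" using finA by (rule card_mono[rotated])
  then show ?thesis using a by simp
qed

context
  fixes \<phi> N assumes ph: "isphi \<phi> N" and NW: "N \<subseteq> W"
begin

lemma ph_closed: "v \<in> W \<Longrightarrow> \<phi> v \<in> carrier A" using ph unfolding isphi_def by blast
lemma ph_mult: "v \<in> W \<Longrightarrow> w \<in> W \<Longrightarrow> \<phi> (v \<otimes>\<^bsub>Wg\<^esub> w) = \<phi> v \<otimes>\<^bsub>A\<^esub> \<phi> w" using ph unfolding isphi_def by blast
lemma ph_ker: "v \<in> W \<Longrightarrow> \<phi> v = \<one>\<^bsub>A\<^esub> \<longleftrightarrow> v \<in> N" using ph unfolding isphi_def by blast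
lemma ph_act: "v \<in> W \<Longrightarrow> h \<in> carrier H \<Longrightarrow> \<phi> (aW v h) = act (\<phi> v) h" using ph unfolding isphi_def by blast
lemma ph_surj: "a \<in> carrier A \<Longrightarrow> \<exists>v\<in>W. \<phi> v = a" using ph unfolding isphi_def by blast

lemma ph_one: "\<phi> \<one>\<^bsub>Wg\<^esub> = \<one>\<^bsub>A\<^esub>"
proof -
  have c: "\<phi> \<one>\<^bsub>Wg\<^esub> \<in> carrier A" by (rule ph_closed) simp
  have "\<phi> \<one>\<^bsub>Wg\<^esub> = \<phi> (\<one>\<^bsub>Wg\<^esub> \<otimes>\<^bsub>Wg\<^esub> \<one>\<^bsub>Wg\<^esub>)" by simp
  also have "\<dots> = \<phi> \<one>\<^bsub>Wg\<^esub> \<otimes>\<^bsub>A\<^esub> \<phi> \<one>\<^bsub>Wg\<^esub>" by (rule ph_mult) simp_all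
  finally show ?thesis using c by (metis A.l_cancel_one A.one_closed A.r_one)
qed

lemma ph_inv: "v \<in> W \<Longrightarrow> \<phi> (inv\<^bsub>Wg\<^esub> v) = inv\<^bsub>A\<^esub> (\<phi> v)"
proof -
  assume v: "v \<in> W"
  have "\<phi> (inv\<^bsub>Wg\<^esub> v) \<otimes>\<^bsub>A\<^esub> \<phi> v = \<phi> (inv\<^bsub>Wg\<^esub> v \<otimes>\<^bsub>Wg\<^esub> v)" using v by (intro ph_mult[symmetric]) simp_all
  also have "\<dots> = \<one>\<^bsub>A\<^esub>" using v by (simp add: WW.l_inv ph_one)
  finally show ?thesis using v ph_closed by (metis A.inv_equality W_inv_closed)
qed

lemma ph_image:
  assumes D: "subgroup D Wg" and Dinv: "\<And>v h. v \<in> D \<Longrightarrow> h \<in> carrier H \<Longrightarrow> aW v h \<in> D"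
    and DN: "\<not> D \<subseteq> N" and a: "a \<in> carrier A"
  shows "\<exists>d\<in>D. \<phi> d = a"
proof -
  have DW: "\<And>v. v \<in> D \<Longrightarrow> v \<in> W" using subgroup.mem_carrier[OF D] by simp
  have "\<phi> ` D = {\<one>\<^bsub>A\<^esub>} \<or> \<phi> ` D = carrier A"
  proof (rule irr_use)
    show "subgroup (\<phi> ` D) A"
    proof (rule A.subgroupI)
      show "\<phi> ` D \<subseteq> carrier A" using DW ph_closed by blast
      have "\<one>\<^bsub>Wg\<^esub> \<in> D" by (rule subgroup.one_closed[OF D])
      then show "\<phi> ` D \<noteq> {}" by blast
      fix b assume "b \<in> \<phi> ` D"
      then obtain d where d: "d \<in> D" "b = \<phi> d" by blast
      have "inv\<^bsub>Wg\<^esub> d \<in> D" by (rule subgroup.m_inv_closed[OF D d(1)])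
      moreover have "\<phi> (inv\<^bsub>Wg\<^esub> d) = inv\<^bsub>A\<^esub> b" using d DW ph_inv by simp
      ultimately show "inv\<^bsub>A\<^esub> b \<in> \<phi> ` D" by (metis image_eqI)
    next
      fix b c assume "b \<in> \<phi> ` D" "c \<in> \<phi> ` D"
      then obtain d e where d: "d \<in> D" "b = \<phi> d" and e: "e \<in> D" "c = \<phi> e" by blast
      have "d \<otimes>\<^bsub>Wg\<^esub> e \<in> D" by (rule subgroup.m_closed[OF D d(1) e(1)])
      moreover have "\<phi> (d \<otimes>\<^bsub>Wg\<^esub> e) = b \<otimes>\<^bsub>A\<^esub> c" using d e DW ph_mult by simp
      ultimately show "b \<otimes>\<^bsub>A\<^esub> c \<in> \<phi> ` D" by (metis image_eqI)
    qed
    fix b h assume "b \<in> \<phi> ` D" and h: "h \<in> carrier H"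
    then obtain d where d: "d \<in> D" "b = \<phi> d" by blast
    have "aW d h \<in> D" by (rule Dinv[OF d(1) h])
    moreover have "\<phi> (aW d h) = act b h" using d DW h ph_act by simp
    ultimately show "act b h \<in> \<phi> ` D" by (metis image_eqI)
  qed
  moreover obtain d where d: "d \<in> D" "d \<notin> N" using DN by blast
  then have "\<phi> d \<noteq> \<one>\<^bsub>A\<^esub>" using DW ph_ker by blast
  then have "\<phi> ` D \<noteq> {\<one>\<^bsub>A\<^esub>}" using d by blast
  ultimately have "\<phi> ` D = carrier A" by simp
  then show ?thesis using a by (metis imageE)
qed

lemma ph_crt:
  assumes D: "subgroup D Wg" and Dinv: "\<And>v h. v \<in> D \<Longrightarrow> h \<in> carrier H \<Longrightarrow> aW v h \<in> D"
    and DN: "\<not> D \<subseteq> N" and x: "x \<in> W"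
  shows "\<exists>d\<in>D. \<exists>n\<in>N. x = d \<otimes>\<^bsub>Wg\<^esub> n"
proof -
  have DW: "\<And>v. v \<in> D \<Longrightarrow> v \<in> W" using subgroup.mem_carrier[OF D] by simp
  obtain d where d: "d \<in> D" "\<phi> d = \<phi> x" using ph_image[OF D Dinv DN ph_closed[OF x]] by blast
  have dW: "d \<in> W" using DW[OF d(1)] .
  let ?n = "inv\<^bsub>Wg\<^esub> d \<otimes>\<^bsub>Wg\<^esub> x"
  have "\<phi> ?n = inv\<^bsub>A\<^esub> (\<phi> x) \<otimes>\<^bsub>A\<^esub> \<phi> x" using dW x d(2) by (simp add: ph_mult ph_inv)
  also have "\<dots> = \<one>\<^bsub>A\<^esub>" using x ph_closed by (simp add: A.l_inv)
  finally have "?n \<in> N" using dW x ph_ker by simp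
  moreover have "x = d \<otimes>\<^bsub>Wg\<^esub> ?n" using dW x by (simp add: WW.m_assoc[symmetric] WW.r_inv)
  ultimately show ?thesis using d(1) by blast
qed

lemma ph_card:
  assumes D: "subgroup D Wg" and Dinv: "\<And>v h. v \<in> D \<Longrightarrow> h \<in> carrier H \<Longrightarrow> aW v h \<in> D"
    and DN: "\<not> D \<subseteq> N"
  shows "card D = card (carrier A) * card (D \<inter> N)"
proof -
  have DW: "\<And>v. v \<in> D \<Longrightarrow> v \<in> W" using subgroup.mem_carrier[OF D] by simp
  have finD: "finite D" using DW finW by (meson rev_finite_subset subsetI)
  define Fa where "Fa a = {d \<in> D. \<phi> d = a}" for a
  have Dun: "D = (\<Union>a\<in>carrier A. Fa a)"
  proof (intro equalityI subsetI)
    fix d assume d: "d \<in> D"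
    then have "\<phi> d \<in> carrier A" "d \<in> Fa (\<phi> d)" using ph_closed[OF DW[OF d]] unfolding Fa_def by simp_all
    then show "d \<in> (\<Union>a\<in>carrier A. Fa a)" by (rule UN_I)
  next
    fix d assume "d \<in> (\<Union>a\<in>carrier A. Fa a)"
    then obtain a where "d \<in> Fa a" by (rule UN_E)
    then show "d \<in> D" unfolding Fa_def by simp
  qed
  have fin: "\<forall>a\<in>carrier A. finite (Fa a)" unfolding Fa_def using finD by simp
  have disj: "\<forall>a\<in>carrier A. \<forall>b\<in>carrier A. a \<noteq> b \<longrightarrow> Fa a \<inter> Fa b = {}" unfolding Fa_def by blast
  have "card D = (\<Sum>a\<in>carrier A. card (Fa a))"
    unfolding Dun by (rule card_UN_disjoint[OF finA fin disj])
  also have "\<dots> = (\<Sum>a\<in>carrier A. card (D \<inter> N))"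
  proof (rule sum.cong[OF refl])
    fix a assume a: "a \<in> carrier A"
    obtain da where da: "da \<in> D" "\<phi> da = a" using ph_image[OF D Dinv DN a] by blast
    have daW: "da \<in> W" using DW[OF da(1)] .
    have "bij_betw (\<lambda>n. da \<otimes>\<^bsub>Wg\<^esub> n) (D \<inter> N) (Fa a)"
    proof (rule bij_betwI[where g="\<lambda>d. inv\<^bsub>Wg\<^esub> da \<otimes>\<^bsub>Wg\<^esub> d"])
      show "(\<lambda>n. da \<otimes>\<^bsub>Wg\<^esub> n) \<in> D \<inter> N \<rightarrow> Fa a"
      proof
        fix n assume n: "n \<in> D \<inter> N"
        then have nW: "n \<in> W" using DW by blast
        have "\<phi> n = \<one>\<^bsub>A\<^esub>" using n nW ph_ker by blast
        then have "\<phi> (da \<otimes>\<^bsub>Wg\<^esub> n) = a" using daW nW da(2) a by (simp add: ph_mult)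
        moreover have "da \<otimes>\<^bsub>Wg\<^esub> n \<in> D" using subgroup.m_closed[OF D da(1)] n by blast
        ultimately show "da \<otimes>\<^bsub>Wg\<^esub> n \<in> Fa a" unfolding Fa_def by blast
      qed
      show "(\<lambda>d. inv\<^bsub>Wg\<^esub> da \<otimes>\<^bsub>Wg\<^esub> d) \<in> Fa a \<rightarrow> D \<inter> N"
      proof
        fix d assume d: "d \<in> Fa a"
        then have dD: "d \<in> D" "\<phi> d = a" unfolding Fa_def by simp_all
        have dW: "d \<in> W" using DW[OF dD(1)] .
        have "inv\<^bsub>Wg\<^esub> da \<otimes>\<^bsub>Wg\<^esub> d \<in> D"
          using subgroup.m_closed[OF D subgroup.m_inv_closed[OF D da(1)] dD(1)] .
        moreover have "\<phi> (inv\<^bsub>Wg\<^esub> da \<otimes>\<^bsub>Wg\<^esub> d) = inv\<^bsub>A\<^esub> a \<otimes>\<^bsub>A\<^esub> a"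
          using daW dW da(2) dD(2) by (simp add: ph_mult ph_inv)
        then have "\<phi> (inv\<^bsub>Wg\<^esub> da \<otimes>\<^bsub>Wg\<^esub> d) = \<one>\<^bsub>A\<^esub>" using a by (simp add: A.l_inv)
        then have "inv\<^bsub>Wg\<^esub> da \<otimes>\<^bsub>Wg\<^esub> d \<in> N" using ph_ker[of "inv\<^bsub>Wg\<^esub> da \<otimes>\<^bsub>Wg\<^esub> d"] daW dW by simp
        ultimately show "inv\<^bsub>Wg\<^esub> da \<otimes>\<^bsub>Wg\<^esub> d \<in> D \<inter> N" by blast
      qed
      fix n assume "n \<in> D \<inter> N"
      then have "n \<in> W" using DW by blast
      then show "inv\<^bsub>Wg\<^esub> da \<otimes>\<^bsub>Wg\<^esub> (da \<otimes>\<^bsub>Wg\<^esub> n) = n" using daW by (rule_tac Wc1)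
    next
      fix d assume "d \<in> Fa a"
      then have "d \<in> W" using DW unfolding Fa_def by blast
      then show "da \<otimes>\<^bsub>Wg\<^esub> (inv\<^bsub>Wg\<^esub> da \<otimes>\<^bsub>Wg\<^esub> d) = d" using daW by (rule_tac Wc2)
    qed
    then show "card (Fa a) = card (D \<inter> N)" by (simp add: bij_betw_same_card)
  qed
  also have "\<dots> = card (carrier A) * card (D \<inter> N)" by simp
  finally show ?thesis .
qed

end


section \<open>Lower bound\<close>

definition CS :: "('h \<times> (nat \<Rightarrow> 'a)) set set \<Rightarrow> ('h \<times> (nat \<Rightarrow> 'a)) set" where
  "CS S = carrier G \<inter> \<Inter>S"

lemma CS_subgroup: "(\<And>M. M \<in> S \<Longrightarrow> subgroup M G) \<Longrightarrow> subgroup (CS S) G"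
proof (rule GG.subgroupI)
  assume S: "\<And>M. M \<in> S \<Longrightarrow> subgroup M G"
  show "CS S \<subseteq> carrier G" unfolding CS_def by blast
  have "\<one>\<^bsub>G\<^esub> \<in> CS S" unfolding CS_def using subgroup.one_closed[OF S] by blast
  then show "CS S \<noteq> {}" by blast
  fix a assume "a \<in> CS S"
  then show "inv\<^bsub>G\<^esub> a \<in> CS S" unfolding CS_def using subgroup.m_inv_closed[OF S] by blast
next
  fix a b assume S: "\<And>M. M \<in> S \<Longrightarrow> subgroup M G" and "a \<in> CS S" "b \<in> CS S"
  then show "a \<otimes>\<^bsub>G\<^esub> b \<in> CS S" unfolding CS_def using subgroup.m_closed[OF S] by blast
qed

lemma NM_CS_insert: "NM (CS (insert M S)) = NM (CS S) \<inter> NM M"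
  unfolding NM_def CS_def by blast

lemma W_alg: "a \<in> W \<Longrightarrow> b \<in> W \<Longrightarrow> c \<in> W \<Longrightarrow> e \<in> W \<Longrightarrow> inv\<^bsub>Wg\<^esub> a \<otimes>\<^bsub>Wg\<^esub> b = c \<otimes>\<^bsub>Wg\<^esub> e \<Longrightarrow>
   a \<otimes>\<^bsub>Wg\<^esub> c = b \<otimes>\<^bsub>Wg\<^esub> inv\<^bsub>Wg\<^esub> e"
proof -
  assume W: "a \<in> W" "b \<in> W" "c \<in> W" "e \<in> W" and eq: "inv\<^bsub>Wg\<^esub> a \<otimes>\<^bsub>Wg\<^esub> b = c \<otimes>\<^bsub>Wg\<^esub> e"
  have "b = a \<otimes>\<^bsub>Wg\<^esub> (inv\<^bsub>Wg\<^esub> a \<otimes>\<^bsub>Wg\<^esub> b)" using W by (simp add: Wc2)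
  also have "\<dots> = a \<otimes>\<^bsub>Wg\<^esub> (c \<otimes>\<^bsub>Wg\<^esub> e)" using eq by simp
  finally have "b \<otimes>\<^bsub>Wg\<^esub> inv\<^bsub>Wg\<^esub> e = a \<otimes>\<^bsub>Wg\<^esub> (c \<otimes>\<^bsub>Wg\<^esub> e) \<otimes>\<^bsub>Wg\<^esub> inv\<^bsub>Wg\<^esub> e" by simp
  also have "\<dots> = a \<otimes>\<^bsub>Wg\<^esub> c" using W by (simp add: WW.m_assoc WW.r_inv)
  finally show ?thesis by simp
qed

context
  fixes F assumes Fmax: "F \<subseteq> {M. maximal_subgroup M G}" and Fint: "carrier G \<inter> \<Inter>F = {\<one>\<^bsub>G\<^esub>}"
begin

lemma F_sub: "M \<in> F \<Longrightarrow> subgroup M G"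
  using Fmax unfolding maximal_subgroup_def by blast

lemma chain: "k \<le> t \<Longrightarrow> \<exists>S. S \<subseteq> {M \<in> F. \<not> Vs \<subseteq> M} \<and> finite S \<and> card S = k \<and> fst ` CS S = carrier H
   \<and> card (NM (CS S)) * card (carrier A) ^ k = card (carrier A) ^ t"
proof (induction k)
  case 0
  have "fst ` CS {} = carrier H"
  proof (intro equalityI subsetI)
    fix h assume "h \<in> fst ` CS {}" then show "h \<in> carrier H" unfolding CS_def carrier_G by force
  next
    fix h assume "h \<in> carrier H"
    then have "(h, \<one>\<^bsub>Wg\<^esub>) \<in> CS {}" unfolding CS_def by simp
    then show "h \<in> fst ` CS {}" by (metis fst_conv image_eqI)
  qed
  moreover have "NM (CS {}) = W" unfolding NM_def CS_def by auto
  ultimately show ?case using cardW by (intro exI[of _ "{}"]) simp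
next
  case (Suc k)
  then obtain S where S: "S \<subseteq> {M \<in> F. \<not> Vs \<subseteq> M}" "finite S" "card S = k" "fst ` CS S = carrier H"
    "card (NM (CS S)) * card (carrier A) ^ k = card (carrier A) ^ t" by auto
  have kt: "k < t" using Suc.prems by simp
  have Ssub: "\<And>M. M \<in> S \<Longrightarrow> subgroup M G" using S(1) F_sub by blast
  let ?C = "CS S"
  let ?D = "NM ?C"
  have C: "subgroup ?C G" by (rule CS_subgroup[OF Ssub])
  have D: "subgroup ?D Wg" by (rule NM_subgroup[OF C])
  have fullC: "\<exists>u. (h, u) \<in> ?C" if "h \<in> carrier H" for h
  proof -
    have "h \<in> fst ` ?C" using that S(4) by simp
    then obtain x where "x \<in> ?C" "h = fst x" by (rule imageE)
    then show ?thesis by (cases x) auto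
  qed
  have Dinv: "aW v h \<in> ?D" if v: "v \<in> ?D" and h: "h \<in> carrier H" for v h
  proof -
    obtain u where "(h, u) \<in> ?C" using fullC[OF h] by blast
    then show ?thesis by (rule NM_invariant[OF C _ v])
  qed
  have cA: "card (carrier A) > 1" by (rule cardA_gt1)
  have "card ?D > 1"
  proof (rule ccontr)
    assume "\<not> card ?D > 1"
    then have "card ?D * card (carrier A) ^ k \<le> 1 * card (carrier A) ^ k" by simp
    also have "\<dots> < card (carrier A) ^ t" using cA kt by (simp add: power_strict_increasing)
    finally show False using S(5) by simp
  qed
  then obtain v where vD: "v \<in> ?D" and v1: "v \<noteq> \<one>\<^bsub>Wg\<^esub>"
  proof -
    assume r: "\<And>v. v \<in> ?D \<Longrightarrow> v \<noteq> \<one>\<^bsub>Wg\<^esub> \<Longrightarrow> thesis"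
    show thesis
    proof (rule ccontr)
      assume "\<not> thesis"
      then have "?D \<subseteq> {\<one>\<^bsub>Wg\<^esub>}" using r by blast
      then have "card ?D \<le> card {\<one>\<^bsub>Wg\<^esub>}" by (intro card_mono) simp_all
      then show False using \<open>card ?D > 1\<close> by simp
    qed
  qed
  have vW: "v \<in> W" by (rule NM_W[OF C vD])
  have "(\<one>\<^bsub>H\<^esub>, v) \<in> carrier G" using vW by simp
  moreover have "(\<one>\<^bsub>H\<^esub>, v) \<noteq> \<one>\<^bsub>G\<^esub>" using v1 by (simp add: oneG)
  ultimately have "(\<one>\<^bsub>H\<^esub>, v) \<notin> \<Inter>F" using Fint by blast
  then obtain M where MF: "M \<in> F" and vM: "(\<one>\<^bsub>H\<^esub>, v) \<notin> M" by blast
  have MV: "\<not> Vs \<subseteq> M" using vM vW unfolding Vs_def by blast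
  have Mmax: "maximal_subgroup M G" using MF Fmax by blast
  have Msub: "subgroup M G" by (rule F_sub[OF MF])
  have MS: "M \<notin> S"
  proof
    assume "M \<in> S"
    moreover have "(\<one>\<^bsub>H\<^esub>, v) \<in> ?C" using vD unfolding NM_def by simp
    ultimately show False using vM unfolding CS_def by blast
  qed
  have DN: "\<not> ?D \<subseteq> NM M" using vD vM unfolding NM_def by blast
  obtain \<phi> where ph: "isphi \<phi> (NM M)" using phi_ex2[OF Mmax MV] by blast
  have NMW: "NM M \<subseteq> W" using NM_W[OF Msub] by blast
  define S' where "S' = insert M S"
  have "card ?D = card (carrier A) * card (?D \<inter> NM M)" by (rule ph_card[OF ph NMW D Dinv DN])
  then have card': "card (NM (CS S')) * card (carrier A) ^ Suc k = card (carrier A) ^ t"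
    using S(5) unfolding S'_def NM_CS_insert by (simp add: algebra_simps)
  have "fst ` CS S' = carrier H"
  proof (intro equalityI subsetI)
    fix h assume "h \<in> fst ` CS S'" then show "h \<in> carrier H" unfolding CS_def carrier_G by force
  next
    fix h assume h: "h \<in> carrier H"
    obtain v1 where v1: "(h, v1) \<in> ?C" using fullC[OF h] by blast
    have "h \<in> fst ` M" using max_F2_full[OF Mmax MV] h by simp
    then obtain y where "y \<in> M" "h = fst y" by (rule imageE)
    then obtain u where u: "(h, u) \<in> M" by (cases y) auto
    have v1W: "v1 \<in> W" using sub_pair[OF C v1] by simp
    have uW: "u \<in> W" using sub_pair[OF Msub u] by simp
    have "inv\<^bsub>Wg\<^esub> v1 \<otimes>\<^bsub>Wg\<^esub> u \<in> W" using v1W uW by simp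
    then obtain d n where d: "d \<in> ?D" and n: "n \<in> NM M" and dn: "inv\<^bsub>Wg\<^esub> v1 \<otimes>\<^bsub>Wg\<^esub> u = d \<otimes>\<^bsub>Wg\<^esub> n"
      using ph_crt[OF ph NMW D Dinv DN] by blast
    have dW: "d \<in> W" by (rule NM_W[OF C d])
    have nW: "n \<in> W" by (rule NM_W[OF Msub n])
    have eq: "v1 \<otimes>\<^bsub>Wg\<^esub> d = u \<otimes>\<^bsub>Wg\<^esub> inv\<^bsub>Wg\<^esub> n" by (rule W_alg[OF v1W uW dW nW dn])
    have "(h, v1 \<otimes>\<^bsub>Wg\<^esub> d) \<in> ?C" by (rule NM_shift[OF C v1 d])
    moreover have "inv\<^bsub>Wg\<^esub> n \<in> NM M" by (rule subgroup.m_inv_closed[OF NM_subgroup[OF Msub] n])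
    then have "(h, u \<otimes>\<^bsub>Wg\<^esub> inv\<^bsub>Wg\<^esub> n) \<in> M" by (rule NM_shift[OF Msub u])
    ultimately have "(h, v1 \<otimes>\<^bsub>Wg\<^esub> d) \<in> CS S'" unfolding S'_def CS_def eq by blast
    then show "h \<in> fst ` CS S'" by (metis fst_conv image_eqI)
  qed
  moreover have "S' \<subseteq> {M \<in> F. \<not> Vs \<subseteq> M}" unfolding S'_def using S(1) MF MV by blast
  moreover have "finite S'" "card S' = Suc k" unfolding S'_def using S(2,3) MS by simp_all
  ultimately show ?case using card' by blast
qed

lemma lower: "finite F \<Longrightarrow> t + sigma H A act \<le> card F"
proof -
  assume finF: "finite F"
  obtain S where S: "S \<subseteq> {M \<in> F. \<not> Vs \<subseteq> M}" "finite S" "card S = t" "fst ` CS S = carrier H"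
    "card (NM (CS S)) * card (carrier A) ^ t = card (carrier A) ^ t" using chain[OF order_refl] by blast
  have Ssub: "\<And>M. M \<in> S \<Longrightarrow> subgroup M G" using S(1) F_sub by blast
  let ?C = "CS S"
  have C: "subgroup ?C G" by (rule CS_subgroup[OF Ssub])
  have "card (carrier A) ^ t > 0" using cardA_gt1 by simp
  then have c1: "card (NM ?C) = 1" using S(5) cardA_gt1 by simp
  have oneC: "(\<one>\<^bsub>H\<^esub>, \<one>\<^bsub>Wg\<^esub>) \<in> ?C" using subgroup.one_closed[OF C] by (simp add: oneG)
  then have "\<one>\<^bsub>Wg\<^esub> \<in> NM ?C" unfolding NM_def by simp
  moreover obtain x where x: "NM ?C = {x}" using c1 by (rule card_1_singletonE)
  ultimately have NC: "NM ?C = {\<one>\<^bsub>Wg\<^esub>}" by simp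
  have fullC: "\<exists>u. (h, u) \<in> ?C" if "h \<in> carrier H" for h
  proof -
    have "h \<in> fst ` ?C" using that S(4) by simp
    then obtain x where "x \<in> ?C" "h = fst x" by (rule imageE)
    then show ?thesis by (cases x) auto
  qed
  define \<gamma> where "\<gamma> h = (SOME v. (h, v) \<in> ?C)" for h
  have gC: "(h, \<gamma> h) \<in> ?C" if "h \<in> carrier H" for h
    unfolding \<gamma>_def using fullC[OF that] by (rule someI_ex)
  have gW: "\<gamma> h \<in> W" if "h \<in> carrier H" for h using sub_pair[OF C gC[OF that]] by simp
  have guniq: "v = \<gamma> h" if "(h, v) \<in> ?C" for h v
  proof -
    have h: "h \<in> carrier H" using sub_pair[OF C that] by simp
    show ?thesis by (rule fiber_unique[OF C NC that gC[OF h]])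
  qed
  have g1: "\<gamma> \<one>\<^bsub>H\<^esub> = \<one>\<^bsub>Wg\<^esub>" using guniq[OF oneC] by simp
  have gcoc: "\<gamma> (h \<otimes>\<^bsub>H\<^esub> k) = aW (\<gamma> h) k \<otimes>\<^bsub>Wg\<^esub> \<gamma> k" if h: "h \<in> carrier H" and k: "k \<in> carrier H" for h k
  proof -
    have "(h, \<gamma> h) \<otimes>\<^bsub>G\<^esub> (k, \<gamma> k) \<in> ?C" by (rule subgroup.m_closed[OF C gC[OF h] gC[OF k]])
    then have "(h \<otimes>\<^bsub>H\<^esub> k, aW (\<gamma> h) k \<otimes>\<^bsub>Wg\<^esub> \<gamma> k) \<in> ?C" using multG[OF h k gW[OF h] gW[OF k]] by simp
    then have "aW (\<gamma> h) k \<otimes>\<^bsub>Wg\<^esub> \<gamma> k = \<gamma> (h \<otimes>\<^bsub>H\<^esub> k)" by (rule guniq)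
    then show ?thesis by simp
  qed
  define K where "K M = {h \<in> carrier H. (h, \<gamma> h) \<in> M}" for M
  have KL: "K M \<in> Lambda H A act" if MF: "M \<in> F" for M
  proof (cases "Vs \<subseteq> M")
    case True
    have Mmax: "maximal_subgroup M G" using MF Fmax by blast
    have M1: "M = Pk (fst ` M)" and M2: "maximal_subgroup (fst ` M) H" using max_F1[OF Mmax True] by simp_all
    have "K M = fst ` M"
    proof (intro equalityI subsetI)
      fix h assume "h \<in> K M"
      then have "(h, \<gamma> h) \<in> M" unfolding K_def by simp
      then show "h \<in> fst ` M" by (metis fst_conv image_eqI)
    next
      fix h assume hM: "h \<in> fst ` M"
      have "subgroup (fst ` M) H" using M2 unfolding maximal_subgroup_def by blast
      then have "fst ` M \<subseteq> carrier H" by (rule subgroup.subset)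
      then have h: "h \<in> carrier H" using hM by blast
      have "(h, \<gamma> h) \<in> Pk (fst ` M)" unfolding Pk_def using hM gW[OF h] by simp
      then show "h \<in> K M" unfolding K_def using h M1 by simp
    qed
    then show ?thesis unfolding Lambda_def using M2 by simp
  next
    case False
    have Mmax: "maximal_subgroup M G" using MF Fmax by blast
    have Msub: "subgroup M G" by (rule F_sub[OF MF])
    obtain \<phi> where ph: "isphi \<phi> (NM M)" using phi_ex2[OF Mmax False] by blast
    have NMW: "NM M \<subseteq> W" using NM_W[OF Msub] by blast
    have NMs: "subgroup (NM M) Wg" by (rule NM_subgroup[OF Msub])
    have fullM: "\<exists>u. (h, u) \<in> M" if "h \<in> carrier H" for h
    proof -
      have "h \<in> fst ` M" using max_F2_full[OF Mmax False] that by simp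
      then obtain y where "y \<in> M" "h = fst y" by (rule imageE)
      then show ?thesis by (cases y) auto
    qed
    define u where "u h = (SOME v. (h, v) \<in> M)" for h
    have uM: "(h, u h) \<in> M" if "h \<in> carrier H" for h
      unfolding u_def using fullM[OF that] by (rule someI_ex)
    have uW: "u h \<in> W" if "h \<in> carrier H" for h using sub_pair[OF Msub uM[OF that]] by simp
    define e where "e h = inv\<^bsub>Wg\<^esub> (u h) \<otimes>\<^bsub>Wg\<^esub> \<gamma> h" for h
    have eW: "e h \<in> W" if "h \<in> carrier H" for h unfolding e_def using uW[OF that] gW[OF that] by simp
    define \<delta> where "\<delta> = (\<lambda>h\<in>carrier H. \<phi> (e h))"
    have ker: "\<phi> (e h) = \<one>\<^bsub>A\<^esub> \<longleftrightarrow> (h, \<gamma> h) \<in> M" if h: "h \<in> carrier H" for h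
    proof -
      have "\<phi> (e h) = \<one>\<^bsub>A\<^esub> \<longleftrightarrow> e h \<in> NM M" by (rule ph_ker[OF ph NMW eW[OF h]])
      also have "\<dots> \<longleftrightarrow> (h, \<gamma> h) \<in> M"
      proof
        assume "e h \<in> NM M"
        from NM_shift[OF Msub uM[OF h] this] have "(h, u h \<otimes>\<^bsub>Wg\<^esub> e h) \<in> M" .
        moreover have "u h \<otimes>\<^bsub>Wg\<^esub> e h = \<gamma> h" unfolding e_def by (rule Wc2[OF gW[OF h] uW[OF h]])
        ultimately show "(h, \<gamma> h) \<in> M" by simp
      next
        assume "(h, \<gamma> h) \<in> M"
        then show "e h \<in> NM M" unfolding e_def by (rule NM_coset[OF Msub uM[OF h]])
      qed
      finally show ?thesis .
    qed
    have dker: "der_kernel H A \<delta> = K M"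
      unfolding der_kernel_def K_def \<delta>_def using ker by auto
    have dder: "\<delta> \<in> derivations H A act"
      unfolding derivations_def
    proof (intro CollectI conjI ballI)
      show "\<delta> \<in> carrier H \<rightarrow>\<^sub>E carrier A" unfolding \<delta>_def using ph_closed[OF ph NMW] eW by simp
      fix h k assume h: "h \<in> carrier H" and k: "k \<in> carrier H"
      have hk: "h \<otimes>\<^bsub>H\<^esub> k \<in> carrier H" using h k by simp
      let ?m = "aW (u h) k \<otimes>\<^bsub>Wg\<^esub> u k"
      have mW: "?m \<in> W" using uW[OF h] uW[OF k] k aW_W by simp
      have "(h, u h) \<otimes>\<^bsub>G\<^esub> (k, u k) \<in> M" by (rule subgroup.m_closed[OF Msub uM[OF h] uM[OF k]])
      then have mM: "(h \<otimes>\<^bsub>H\<^esub> k, ?m) \<in> M" using multG[OF h k uW[OF h] uW[OF k]] by simp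
      have cN: "inv\<^bsub>Wg\<^esub> (u (h \<otimes>\<^bsub>H\<^esub> k)) \<otimes>\<^bsub>Wg\<^esub> ?m \<in> NM M" by (rule NM_coset[OF Msub uM[OF hk] mM])
      have cW: "inv\<^bsub>Wg\<^esub> (u (h \<otimes>\<^bsub>H\<^esub> k)) \<otimes>\<^bsub>Wg\<^esub> ?m \<in> W" using uW[OF hk] mW by simp
      have split: "e (h \<otimes>\<^bsub>H\<^esub> k) = (inv\<^bsub>Wg\<^esub> (u (h \<otimes>\<^bsub>H\<^esub> k)) \<otimes>\<^bsub>Wg\<^esub> ?m) \<otimes>\<^bsub>Wg\<^esub> (aW (e h) k \<otimes>\<^bsub>Wg\<^esub> e k)"
      proof -
        have A1: "aW (e h) k \<otimes>\<^bsub>Wg\<^esub> e k = inv\<^bsub>Wg\<^esub> ?m \<otimes>\<^bsub>Wg\<^esub> \<gamma> (h \<otimes>\<^bsub>H\<^esub> k)"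
          unfolding gcoc[OF h k] e_def using uW[OF h] uW[OF k] gW[OF h] gW[OF k] k aW_W
          by (simp add: aW_mult aW_inv WW.inv_mult WW.m_ac)
        have "e (h \<otimes>\<^bsub>H\<^esub> k) = (inv\<^bsub>Wg\<^esub> (u (h \<otimes>\<^bsub>H\<^esub> k)) \<otimes>\<^bsub>Wg\<^esub> ?m) \<otimes>\<^bsub>Wg\<^esub> (inv\<^bsub>Wg\<^esub> ?m \<otimes>\<^bsub>Wg\<^esub> \<gamma> (h \<otimes>\<^bsub>H\<^esub> k))"
          unfolding e_def using uW[OF hk] mW gW[OF hk] by (simp add: WW.m_assoc Wc2)
        then show ?thesis using A1 by simp
      qed
      have "\<delta> (h \<otimes>\<^bsub>H\<^esub> k) = \<phi> (e (h \<otimes>\<^bsub>H\<^esub> k))" unfolding \<delta>_def using hk by simp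
      also have "\<dots> = \<phi> (inv\<^bsub>Wg\<^esub> (u (h \<otimes>\<^bsub>H\<^esub> k)) \<otimes>\<^bsub>Wg\<^esub> ?m) \<otimes>\<^bsub>A\<^esub> \<phi> (aW (e h) k \<otimes>\<^bsub>Wg\<^esub> e k)"
        unfolding split using cW eW[OF h] eW[OF k] k aW_W by (intro ph_mult[OF ph NMW]) simp_all
      also have "\<phi> (inv\<^bsub>Wg\<^esub> (u (h \<otimes>\<^bsub>H\<^esub> k)) \<otimes>\<^bsub>Wg\<^esub> ?m) = \<one>\<^bsub>A\<^esub>" using ph_ker[OF ph NMW cW] cN by simp
      also have "\<phi> (aW (e h) k \<otimes>\<^bsub>Wg\<^esub> e k) = act (\<phi> (e h)) k \<otimes>\<^bsub>A\<^esub> \<phi> (e k)"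
        using eW[OF h] eW[OF k] k aW_W by (simp add: ph_mult[OF ph NMW] ph_act[OF ph NMW])
      finally show "\<delta> (h \<otimes>\<^bsub>H\<^esub> k) = act (\<delta> h) k \<otimes>\<^bsub>A\<^esub> \<delta> k"
        unfolding \<delta>_def using h k eW ph_closed[OF ph NMW] by simp
    qed
    show ?thesis unfolding Lambda_def using dder dker[symmetric] by blast
  qed
  define F' where "F' = K ` (F - S)"
  have SF: "S \<subseteq> F" using S(1) by blast
  have "F' \<subseteq> Lambda H A act" unfolding F'_def using KL by blast
  moreover have "finite F'" unfolding F'_def using finF by simp
  moreover have "carrier H \<inter> \<Inter>F' = {\<one>\<^bsub>H\<^esub>}"
  proof (intro equalityI subsetI)
    fix h assume hF: "h \<in> carrier H \<inter> \<Inter>F'"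
    then have h: "h \<in> carrier H" by simp
    have "(h, \<gamma> h) \<in> M" if "M \<in> F" for M
    proof (cases "M \<in> S")
      case True then show ?thesis using gC[OF h] unfolding CS_def by blast
    next
      case False
      then have "K M \<in> F'" unfolding F'_def using that by blast
      then show ?thesis using hF unfolding K_def by blast
    qed
    moreover have "(h, \<gamma> h) \<in> carrier G" using h gW[OF h] by simp
    ultimately have "(h, \<gamma> h) \<in> carrier G \<inter> \<Inter>F" by blast
    then have "(h, \<gamma> h) = \<one>\<^bsub>G\<^esub>" using Fint by blast
    then show "h \<in> {\<one>\<^bsub>H\<^esub>}" by (simp add: oneG)
  next
    fix h assume "h \<in> {\<one>\<^bsub>H\<^esub>}"
    then have h: "h = \<one>\<^bsub>H\<^esub>" by simp
    have "h \<in> K M" if "M \<in> F" for M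
    proof -
      have "\<one>\<^bsub>G\<^esub> \<in> M" by (rule subgroup.one_closed[OF F_sub[OF that]])
      then show ?thesis unfolding K_def h using g1 by (simp add: oneG)
    qed
    then show "h \<in> carrier H \<inter> \<Inter>F'" unfolding F'_def using h by auto
  qed
  ultimately have "sigma H A act \<le> card F'" by (intro sigma_le)
  also have "card F' \<le> card (F - S)" unfolding F'_def by (rule card_image_le) (use finF in simp)
  also have "\<dots> = card F - t" using card_Diff_subset[OF S(2) SF] S(3) by simp
  finally have "sigma H A act \<le> card F - t" .
  moreover have "t \<le> card F" using card_mono[OF finF SF] S(3) by simp
  ultimately show ?thesis by simp
qed

end

lemma alpha_lower: "t + sigma H A act \<le> alpha G"
proof -
  have ex: "\<exists>n. \<exists>F. F \<subseteq> {M. maximal_subgroup M G} \<and> finite F \<and> card F = n \<and> carrier G \<inter> \<Inter>F = frattini G"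
    using upper frattini_one by blast
  obtain F where F: "F \<subseteq> {M. maximal_subgroup M G}" "finite F" "card F = alpha G" "carrier G \<inter> \<Inter>F = frattini G"
    using LeastI_ex[OF ex] unfolding alpha_def by blast
  have "t + sigma H A act \<le> card F" by (rule lower[OF F(1) _ F(2)]) (use F(4) frattini_one in simp)
  then show ?thesis using F(3) by simp
qed

lemma main: "alpha G = t + sigma H A act \<and> t \<le> alpha G \<and> alpha G \<le> t + dim_End H A act"
  using alpha_lower alpha_upper sigma_le_dim by simp

end

theorem lemma5p3:
  fixes H :: "'h monoid" and A :: "'a monoid" and act :: "'a \<Rightarrow> 'h \<Rightarrow> 'a" and t :: nat
  assumes "group H" and "finite (carrier H)"
    and "comm_group A" and "finite (carrier A)"
    and "right_module H A act"
    and "faithful_module H A act"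
    and "irreducible_module H A act"
    and "t > 0"
  shows "alpha (semidirect_power H A act t) = t + sigma H A act
         \<and> t \<le> alpha (semidirect_power H A act t)
         \<and> alpha (semidirect_power H A act t) \<le> t + dim_End H A act"
proof -
  interpret ctx H A act t
    by (intro ctx.intro ctx_axioms.intro) (use assms in simp_all)
  show ?thesis by (rule main)
qed

end
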